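(* For every $n\ge1$ and every lattice congruence $R$ of the weak order on $S_n$, every vertex of the quotient graph $Q_R$ has degree at most $2n-\lceil 2\sqrt n\,\rceil$. Moreover, for every $n\ge1$ there is a lattice congruence $R$ of the weak order on $S_n$ such that $Q_R$ has a vertex of degree exactly $2n-\lceil2\sqrt n\,\rceil$.
   Context: $S_n$ is the set of permutations of $[n]$ with the weak order: $\pi\le\rho$ iff $\mathrm{inv}(\pi)\subseteq\mathrm{inv}(\rho)$, where $\mathrm{inv}(a_1\cdots a_n)=\{(a_i,a_j):i<j,\ a_i>a_j\}$. A lattice congruence is an equivalence relation compatible with joins and meets. The quotient graph $Q_R$ is the undirected cover graph of the lattice quotient $S_n/R$, whose elements are the classes, ordered by $X<Y$ iff $x<y$ for some $x\in X$, $y\in Y$. *)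

theory Defs
  imports Complex_Main
begin

text \<open>Permutations of [n] = {1..n}, in one-line notation a_1 ... a_n (as lists).\<close>
definition perms :: "nat \<Rightarrow> nat list set" where
  "perms n = {xs. distinct xs \<and> set xs = {1..n}}"

definition invs :: "nat list \<Rightarrow> (nat \<times> nat) set" where
  "invs xs = {(xs ! i, xs ! j) | i j. i < j \<and> j < length xs \<and> xs ! i > xs ! j}"

definition weak_le :: "nat list \<Rightarrow> nat list \<Rightarrow> bool" where
  "weak_le p q \<longleftrightarrow> invs p \<subseteq> invs q"

definition weak_less :: "nat list \<Rightarrow> nat list \<Rightarrow> bool" where
  "weak_less p q \<longleftrightarrow> weak_le p q \<and> p \<noteq> q"

definition is_join :: "nat \<Rightarrow> nat list \<Rightarrow> nat list \<Rightarrow> nat list \<Rightarrow> bool" where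
  "is_join n x y z \<longleftrightarrow> z \<in> perms n \<and> weak_le x z \<and> weak_le y z \<and>
     (\<forall>w\<in>perms n. weak_le x w \<and> weak_le y w \<longrightarrow> weak_le z w)"

definition is_meet :: "nat \<Rightarrow> nat list \<Rightarrow> nat list \<Rightarrow> nat list \<Rightarrow> bool" where
  "is_meet n x y z \<longleftrightarrow> z \<in> perms n \<and> weak_le z x \<and> weak_le z y \<and>
     (\<forall>w\<in>perms n. weak_le w x \<and> weak_le w y \<longrightarrow> weak_le w z)"

definition lattice_congruence :: "nat \<Rightarrow> (nat list \<times> nat list) set \<Rightarrow> bool" where
  "lattice_congruence n R \<longleftrightarrow> equiv (perms n) R \<and>
     (\<forall>x x' y y' z z'. (x, x') \<in> R \<and> (y, y') \<in> R \<and> is_join n x y z \<and> is_join n x' y' z'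
        \<longrightarrow> (z, z') \<in> R) \<and>
     (\<forall>x x' y y' z z'. (x, x') \<in> R \<and> (y, y') \<in> R \<and> is_meet n x y z \<and> is_meet n x' y' z'
        \<longrightarrow> (z, z') \<in> R)"

definition qless :: "nat list set \<Rightarrow> nat list set \<Rightarrow> bool" where
  "qless X Y \<longleftrightarrow> X \<noteq> Y \<and> (\<exists>x\<in>X. \<exists>y\<in>Y. weak_less x y)"

definition qcovers :: "nat \<Rightarrow> (nat list \<times> nat list) set \<Rightarrow> nat list set \<Rightarrow> nat list set \<Rightarrow> bool" where
  "qcovers n R X Y \<longleftrightarrow> X \<in> perms n // R \<and> Y \<in> perms n // R \<and> qless X Y \<and>
     \<not> (\<exists>Z\<in>perms n // R. qless X Z \<and> qless Z Y)"

definition qdegree :: "nat \<Rightarrow> (nat list \<times> nat list) set \<Rightarrow> nat list set \<Rightarrow> nat" where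
  "qdegree n R X = card {Y \<in> perms n // R. qcovers n R X Y \<or> qcovers n R Y X}"

end

theory Submission
  imports Defs
begin


definition bef :: "nat list \<Rightarrow> nat \<Rightarrow> nat \<Rightarrow> bool" where
  "bef xs a b \<longleftrightarrow> (\<exists>i j. i < j \<and> j < length xs \<and> xs ! i = a \<and> xs ! j = b)"

lemma invs_bef: "invs xs = {(a,b). bef xs a b \<and> b < a}"
  unfolding invs_def bef_def by auto

lemma bef_set: "bef xs a b \<Longrightarrow> a \<in> set xs \<and> b \<in> set xs"
  unfolding bef_def by auto

lemma bef_Nil[simp]: "\<not> bef [] a b"
  unfolding bef_def by auto

lemma bef_Cons: "bef (x # xs) a b \<longleftrightarrow> (a = x \<and> b \<in> set xs) \<or> bef xs a b"
proof
  assume "bef (x # xs) a b"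
  then obtain i j where ij: "i < j" "j < length (x#xs)" "(x#xs) ! i = a" "(x#xs) ! j = b"
    unfolding bef_def by blast
  show "(a = x \<and> b \<in> set xs) \<or> bef xs a b"
  proof (cases i)
    case 0
    then have "a = x" using ij by simp
    moreover have "b \<in> set xs" using ij 0
      by (metis Suc_less_eq gr0_implies_Suc length_Cons nth_Cons_Suc nth_mem)
    ultimately show ?thesis by simp
  next
    case (Suc i')
    then obtain j' where "j = Suc j'" using ij by (cases j) auto
    then show ?thesis using ij Suc unfolding bef_def by auto
  qed
next
  assume "(a = x \<and> b \<in> set xs) \<or> bef xs a b"
  then show "bef (x # xs) a b"
  proof
    assume h: "a = x \<and> b \<in> set xs"
    then obtain j where "j < length xs" "xs ! j = b" by (auto simp: in_set_conv_nth)
    then show ?thesis using h unfolding bef_def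
      by (rule_tac x=0 in exI, rule_tac x="Suc j" in exI) auto
  next
    assume "bef xs a b"
    then obtain i j where "i < j" "j < length xs" "xs ! i = a" "xs ! j = b" unfolding bef_def by blast
    then show ?thesis unfolding bef_def
      by (rule_tac x="Suc i" in exI, rule_tac x="Suc j" in exI) auto
  qed
qed

lemma bef_irrefl: "distinct xs \<Longrightarrow> \<not> bef xs a a"
  by (induction xs) (auto simp: bef_Cons)

lemma bef_trans: "distinct xs \<Longrightarrow> bef xs a b \<Longrightarrow> bef xs b c \<Longrightarrow> bef xs a c"
  by (induction xs) (auto simp: bef_Cons dest: bef_set)

lemma bef_total: "a \<in> set xs \<Longrightarrow> b \<in> set xs \<Longrightarrow> a \<noteq> b \<Longrightarrow> bef xs a b \<or> bef xs b a"
  by (induction xs) (auto simp: bef_Cons)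

lemma bef_asym: "distinct xs \<Longrightarrow> bef xs a b \<Longrightarrow> \<not> bef xs b a"
  using bef_irrefl bef_trans by blast

lemma bef_Cons_tail: "x \<notin> set xs \<Longrightarrow> bef xs a b \<longleftrightarrow> bef (x#xs) a b \<and> a \<noteq> x"
  by (auto simp: bef_Cons dest: bef_set)

lemma list_eq_by_bef:
  "distinct xs \<Longrightarrow> distinct ys \<Longrightarrow> set xs = set ys \<Longrightarrow> (\<forall>a b. bef xs a b \<longleftrightarrow> bef ys a b) \<Longrightarrow> xs = ys"
proof (induction xs arbitrary: ys)
  case Nil
  then show ?case by simp
next
  case (Cons x xs)
  then obtain y ys' where ys: "ys = y # ys'" by (cases ys) auto
  have "x = y"
  proof (rule ccontr)
    assume "x \<noteq> y"
    then have "y \<in> set xs" "x \<in> set ys'" using Cons.prems ys by auto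
    then have "bef (x#xs) x y" "bef ys y x" using ys by (auto simp: bef_Cons)
    then show False using Cons.prems bef_asym by blast
  qed
  moreover have "set xs = set ys'" using Cons.prems ys \<open>x = y\<close> by auto
  moreover have "xs = ys'"
    apply (rule Cons.IH)
    using \<open>set xs = set ys'\<close> apply simp_all
    using Cons.prems ys \<open>x = y\<close> bef_Cons_tail[of x xs] bef_Cons_tail[of x ys'] by auto
  ultimately show ?case using ys by simp
qed

lemma perms_D: "p \<in> perms n \<Longrightarrow> distinct p \<and> set p = {1..n} \<and> length p = n"
  unfolding perms_def using distinct_card by fastforce

lemma finite_perms: "finite (perms n)"
proof -
  have "perms n \<subseteq> {xs. set xs \<subseteq> {1..n} \<and> length xs = n}" using perms_D by auto
  then show ?thesis using finite_lists_length_eq[of "{1..n}" n] finite_subset by blast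
qed

definition DD :: "nat \<Rightarrow> (nat \<times> nat) set" where
  "DD n = {(a,c). 1 \<le> c \<and> c < a \<and> a \<le> n}"

definition cotr :: "(nat \<times> nat) set \<Rightarrow> bool" where
  "cotr T \<longleftrightarrow> (\<forall>a b c. (a,c) \<in> T \<longrightarrow> c < b \<longrightarrow> b < a \<longrightarrow> (a,b) \<in> T \<or> (b,c) \<in> T)"

definition good :: "nat \<Rightarrow> (nat \<times> nat) set \<Rightarrow> bool" where
  "good n T \<longleftrightarrow> T \<subseteq> DD n \<and> trans T \<and> cotr T"

lemma finite_DD: "finite (DD n)"
  by (rule finite_subset[of _ "{1..n} \<times> {1..n}"]) (auto simp: DD_def)

lemma bef_perm_iff:
  assumes "p \<in> perms n" "a \<in> {1..n}" "b \<in> {1..n}"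
  shows "bef p a b \<longleftrightarrow> ((b < a \<and> (a,b) \<in> invs p) \<or> (a < b \<and> (b,a) \<notin> invs p))"
proof -
  have d: "distinct p" and ab: "a \<in> set p" "b \<in> set p" using perms_D[OF assms(1)] assms by auto
  consider "a = b" | "a < b" | "b < a" by linarith
  then show ?thesis
  proof cases
    case 1 then show ?thesis using bef_irrefl[OF d] by simp
  next
    case 2
    then have "bef p a b \<longleftrightarrow> \<not> bef p b a" using bef_total[OF ab] bef_asym[OF d] by auto
    then show ?thesis using 2 by (simp add: invs_bef)
  next
    case 3 then show ?thesis by (simp add: invs_bef)
  qed
qed

lemma good_invs: "p \<in> perms n \<Longrightarrow> good n (invs p)"
  unfolding good_def cotr_def trans_def
proof (intro conjI allI impI)
  assume p: "p \<in> perms n"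
  show "invs p \<subseteq> DD n" using perms_D[OF p] by (auto simp: invs_bef DD_def dest!: bef_set)
  fix a b c
  { assume "(a,b) \<in> invs p" "(b,c) \<in> invs p"
    then show "(a,c) \<in> invs p" using perms_D[OF p] by (auto simp: invs_bef intro: bef_trans) }
  { assume h: "(a,c) \<in> invs p" "c < b" "b < a"
    then have "a \<in> {1..n}" "c \<in> {1..n}" using perms_D[OF p] by (auto simp: invs_bef dest!: bef_set)
    then have "b \<in> set p" using h perms_D[OF p] by auto
    moreover have "a \<in> set p" using \<open>a \<in> {1..n}\<close> perms_D[OF p] by auto
    moreover have "bef p a c" using h by (auto simp: invs_bef)
    ultimately show "(a,b) \<in> invs p \<or> (b,c) \<in> invs p"
    proof (cases "bef p a b")
      case True then show ?thesis using h by (simp add: invs_bef)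
    next
      case False
      then have "bef p b a" using bef_total[of a p b] \<open>a \<in> set p\<close> \<open>b \<in> set p\<close> h(3) by auto
      then have "bef p b c" using bef_trans[of p b a c] perms_D[OF p] \<open>bef p a c\<close> by blast
      then show ?thesis using h by (simp add: invs_bef)
    qed }
qed

lemma invs_inj:
  assumes "p \<in> perms n" "q \<in> perms n" "invs p = invs q"
  shows "p = q"
proof (rule list_eq_by_bef)
  show "distinct p" "distinct q" "set p = set q" using perms_D assms by auto
  show "\<forall>a b. bef p a b \<longleftrightarrow> bef q a b"
  proof (intro allI)
    fix a b
    show "bef p a b \<longleftrightarrow> bef q a b"
    proof (cases "a \<in> {1..n} \<and> b \<in> {1..n}")
      case True
      then show ?thesis using bef_perm_iff[OF assms(1)] bef_perm_iff[OF assms(2)] assms(3) by auto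
    next
      case False
      then show ?thesis using bef_set perms_D assms(1,2) by blast
    qed
  qed
qed



lemma sort_exists:
  assumes fin: "finite S"
    and irr: "\<And>a. a \<in> S \<Longrightarrow> \<not> lt a a"
    and tr: "\<And>a b c. a \<in> S \<Longrightarrow> b \<in> S \<Longrightarrow> c \<in> S \<Longrightarrow> lt a b \<Longrightarrow> lt b c \<Longrightarrow> lt a c"
    and tot: "\<And>a b. a \<in> S \<Longrightarrow> b \<in> S \<Longrightarrow> a \<noteq> b \<Longrightarrow> lt a b \<or> lt b a"
  shows "\<exists>xs. distinct xs \<and> set xs = S \<and> (\<forall>a b. bef xs a b \<longleftrightarrow> a \<in> S \<and> b \<in> S \<and> lt a b)"
proof -
  define key where "key a = card {b\<in>S. lt b a}" for a
  have keylt: "key a < key b" if "a \<in> S" "b \<in> S" "lt a b" for a b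
  proof -
    have "{c\<in>S. lt c a} \<subseteq> {c\<in>S. lt c b}" using tr that by blast
    moreover have "a \<in> {c\<in>S. lt c b} - {c\<in>S. lt c a}" using that irr by auto
    ultimately have "{c\<in>S. lt c a} \<subset> {c\<in>S. lt c b}" by blast
    then show ?thesis unfolding key_def using fin by (intro psubset_card_mono) auto
  qed
  define xs where "xs = sort_key key (sorted_list_of_set S)"
  have d: "distinct xs" and s: "set xs = S" using fin by (auto simp: xs_def)
  have so: "sorted (map key xs)" unfolding xs_def by simp
  have "bef xs a b \<longleftrightarrow> a \<in> S \<and> b \<in> S \<and> lt a b" for a b
  proof
    assume "bef xs a b"
    then obtain i j where ij: "i < j" "j < length xs" "xs ! i = a" "xs ! j = b" unfolding bef_def by blast
    have "key a \<le> key b" using so ij sorted_nth_mono[of "map key xs" i j] by auto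
    moreover have "a \<noteq> b" using d ij nth_eq_iff_index_eq by fastforce
    moreover have ab: "a \<in> S" "b \<in> S" using ij s by auto
    ultimately show "a \<in> S \<and> b \<in> S \<and> lt a b" using tot[of a b] keylt[of b a] by force
  next
    assume h: "a \<in> S \<and> b \<in> S \<and> lt a b"
    then have "a \<noteq> b" using irr by auto
    then have "bef xs a b \<or> bef xs b a" using bef_total[of a xs b] h s by auto
    moreover have "\<not> bef xs b a"
    proof
      assume "bef xs b a"
      then obtain i j where ij: "i < j" "j < length xs" "xs ! i = b" "xs ! j = a" unfolding bef_def by blast
      have "key b \<le> key a" using so ij sorted_nth_mono[of "map key xs" i j] by auto
      then show False using keylt[of a b] h by auto
    qed
    ultimately show "bef xs a b" by blast
  qed
  then show ?thesis using d s by blast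
qed

lemma realize_ex:
  assumes g: "good n T"
  shows "\<exists>w\<in>perms n. invs w = T"
proof -
  have TD: "T \<subseteq> DD n" and ttr: "trans T" and tco: "cotr T" using g unfolding good_def by auto
  define lt where "lt a b \<longleftrightarrow> (b < a \<and> (a,b) \<in> T) \<or> (a < b \<and> (b,a) \<notin> T)" for a b
  have trl: "lt a c" if "lt a b" "lt b c" for a b c
  proof -
    have tT: "\<And>x y z. (x,y) \<in> T \<Longrightarrow> (y,z) \<in> T \<Longrightarrow> (x,z) \<in> T" using ttr unfolding trans_def by blast
    have cT: "\<And>x y z. (x,z) \<in> T \<Longrightarrow> z < y \<Longrightarrow> y < x \<Longrightarrow> (x,y) \<in> T \<or> (y,z) \<in> T"
      using tco unfolding cotr_def by blast
    show ?thesis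
    proof (cases "a = c")
      case True then show ?thesis using that unfolding lt_def by auto
    next
      case False
      have "a \<noteq> b" "b \<noteq> c" using that unfolding lt_def by auto
      then consider "c < b" "b < a" | "a < b" "b < c" | "b < a" "b < c" | "a < b" "c < b"
        by linarith
      then show ?thesis
      proof cases
        case 1
        then have "(a,b) \<in> T" "(b,c) \<in> T" using that unfolding lt_def by auto
        then show ?thesis using tT 1 unfolding lt_def by auto
      next
        case 2
        then have "(b,a) \<notin> T" "(c,b) \<notin> T" using that unfolding lt_def by auto
        then have "(c,a) \<notin> T" using cT[of c a b] 2 by auto
        then show ?thesis using 2 unfolding lt_def by auto
      next
        case 3
        then have h: "(a,b) \<in> T" "(c,b) \<notin> T" using that unfolding lt_def by auto
        show ?thesis
        proof (cases "c < a")
          case True then show ?thesis using cT[of a b c] h 3 unfolding lt_def by auto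
        next
          case False then have "a < c" using \<open>a \<noteq> c\<close> by auto
          then show ?thesis using tT[of c a b] h unfolding lt_def by auto
        qed
      next
        case 4
        then have h: "(b,a) \<notin> T" "(b,c) \<in> T" using that unfolding lt_def by auto
        show ?thesis
        proof (cases "c < a")
          case True then show ?thesis using cT[of b c a] h 4 unfolding lt_def by auto
        next
          case False then have "a < c" using \<open>a \<noteq> c\<close> by auto
          then show ?thesis using tT[of b c a] h unfolding lt_def by auto
        qed
      qed
    qed
  qed
  obtain xs where xs: "distinct xs" "set xs = {1..n}" "\<forall>a b. bef xs a b \<longleftrightarrow> a \<in> {1..n} \<and> b \<in> {1..n} \<and> lt a b"
  proof -
    have irr: "\<And>a. \<not> lt a a" unfolding lt_def by simp
    have tot: "\<And>a b. a \<noteq> b \<Longrightarrow> lt a b \<or> lt b a" unfolding lt_def by (case_tac "a < b") auto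
    show ?thesis using that sort_exists[of "{1..n}" lt] trl irr tot by blast
  qed
  have "xs \<in> perms n" using xs unfolding perms_def by auto
  moreover have "invs xs = T"
  proof (intro set_eqI)
    fix p :: "nat \<times> nat"
    obtain a b where p: "p = (a,b)" by (cases p)
    have "p \<in> invs xs \<longleftrightarrow> a \<in> {1..n} \<and> b \<in> {1..n} \<and> lt a b \<and> b < a" using xs(3) p by (simp add: invs_bef)
    also have "\<dots> \<longleftrightarrow> a \<in> {1..n} \<and> b \<in> {1..n} \<and> b < a \<and> (a,b) \<in> T" unfolding lt_def by auto
    also have "\<dots> \<longleftrightarrow> (a,b) \<in> T" using TD unfolding DD_def by auto
    finally show "p \<in> invs xs \<longleftrightarrow> p \<in> T" using p by simp
  qed
  ultimately show ?thesis by blast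
qed

definition realize :: "nat \<Rightarrow> (nat \<times> nat) set \<Rightarrow> nat list" where
  "realize n T = (SOME w. w \<in> perms n \<and> invs w = T)"

lemma realize: "good n T \<Longrightarrow> realize n T \<in> perms n \<and> invs (realize n T) = T"
  unfolding realize_def using realize_ex someI_ex by (metis (mono_tags, lifting))

lemma weak_le_antisym: "p \<in> perms n \<Longrightarrow> q \<in> perms n \<Longrightarrow> weak_le p q \<Longrightarrow> weak_le q p \<Longrightarrow> p = q"
  unfolding weak_le_def using invs_inj by blast

lemma trancl_sub: "trans B \<Longrightarrow> A \<subseteq> B \<Longrightarrow> A\<^sup>+ \<subseteq> B"
  by (metis trancl_id trancl_mono subrelI)

lemma trancl_desc: fixes U :: "(nat \<times> nat) set" assumes "U \<subseteq> {(a,c). c < a}" "(a,c) \<in> U\<^sup>+" shows "c < a"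
  using assms(2) proof (induction rule: trancl_induct)
  case (base y) then show ?case using assms(1) by auto
next
  case (step y z)
  have "z < y" using step(2) assms(1) by blast
  then show ?case using step by linarith
qed

lemma trancl_cotr:
  assumes UD: "U \<subseteq> {(a,c). c < a}" and cU: "cotr U"
  shows "cotr (U\<^sup>+)"
  unfolding cotr_def
proof (intro allI impI)
  fix a b c
  assume h: "(a,c) \<in> U\<^sup>+" "c < b" "b < a"
  have "\<forall>b. c < b \<longrightarrow> b < a \<longrightarrow> (a,b) \<in> U\<^sup>+ \<or> (b,c) \<in> U\<^sup>+"
    using h(1)
  proof (induction rule: trancl_induct)
    case (base y)
    then show ?case using cU unfolding cotr_def by blast
  next
    case (step d z)
    show ?case
    proof (intro allI impI)
      fix b assume hb: "z < b" "b < a"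
      have "z < d" using step UD by auto
      have "d < a" using trancl_desc[OF UD step(1)] .
      consider "b = d" | "d < b" | "b < d" by linarith
      then show "(a,b) \<in> U\<^sup>+ \<or> (b,z) \<in> U\<^sup>+"
      proof cases
        case 1 then show ?thesis using step by auto
      next
        case 2
        then have "(a,b) \<in> U\<^sup>+ \<or> (b,d) \<in> U\<^sup>+" using step.IH hb by auto
        then show ?thesis using step(2) by (meson trancl.trancl_into_trancl)
      next
        case 3
        then have "(d,b) \<in> U \<or> (b,z) \<in> U" using cU step(2) hb unfolding cotr_def by blast
        then show ?thesis using step(1) by (meson r_into_trancl' trancl_into_trancl)
      qed
    qed
  qed
  then show "(a,b) \<in> U\<^sup>+ \<or> (b,c) \<in> U\<^sup>+" using h by blast
qed

lemma good_Un_trancl: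
  assumes "good n A" "good n B"
  shows "good n ((A \<union> B)\<^sup>+)"
proof -
  have D: "A \<union> B \<subseteq> DD n" using assms unfolding good_def by auto
  have tD: "trans (DD n)" unfolding trans_def DD_def by auto
  have "(A \<union> B)\<^sup>+ \<subseteq> DD n" using trancl_mono[OF _ D] tD by (metis subrelI trancl_id)
  moreover have "cotr (A \<union> B)" using assms unfolding good_def cotr_def by blast
  moreover have "A \<union> B \<subseteq> {(a,c). c < a}" using D unfolding DD_def by auto
  ultimately show ?thesis unfolding good_def using trancl_cotr by auto
qed

lemma good_compl: "good n T \<Longrightarrow> good n (DD n - T)"
  unfolding good_def cotr_def trans_def DD_def by (auto; meson)

lemma good_compl_iff: "T \<subseteq> DD n \<Longrightarrow> good n (DD n - T) \<longleftrightarrow> good n T"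
  using good_compl[of n "DD n - T"] good_compl[of n T] by (metis Diff_Diff_Int inf.absorb_iff2)

lemma join_char:
  assumes "x \<in> perms n" "y \<in> perms n"
  shows "is_join n x y (realize n ((invs x \<union> invs y)\<^sup>+))"
    and "is_join n x y z \<Longrightarrow> invs z = (invs x \<union> invs y)\<^sup>+"
proof -
  let ?U = "(invs x \<union> invs y)\<^sup>+"
  have g: "good n ?U" using good_Un_trancl good_invs assms by blast
  note r = realize[OF g]
  have ub: "?U \<subseteq> invs w" if "w \<in> perms n" "weak_le x w" "weak_le y w" for w
  proof -
    have "trans (invs w)" using good_invs[OF that(1)] unfolding good_def by auto
    then show ?thesis using that unfolding weak_le_def by (simp add: trancl_sub)
  qed
  have xu: "invs x \<subseteq> ?U" "invs y \<subseteq> ?U" by (rule subrelI, rule r_into_trancl, simp)+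
  show j: "is_join n x y (realize n ?U)"
    unfolding is_join_def
  proof (intro conjI ballI impI)
    show "realize n ?U \<in> perms n" using r by simp
    show "weak_le x (realize n ?U)" "weak_le y (realize n ?U)" unfolding weak_le_def using r xu by simp_all
    fix w assume "w \<in> perms n" "weak_le x w \<and> weak_le y w"
    then show "weak_le (realize n ?U) w" using ub[of w] r by (simp add: weak_le_def)
  qed
  assume jz: "is_join n x y z"
  have A: "\<forall>w\<in>perms n. weak_le x w \<and> weak_le y w \<longrightarrow> weak_le z w" using jz unfolding is_join_def by blast
  have "weak_le z (realize n ?U)"
    by (rule A[rule_format]) (use j in \<open>auto simp: is_join_def\<close>)
  then have "invs z \<subseteq> ?U" using r unfolding weak_le_def by simp
  moreover have "?U \<subseteq> invs z" using jz unfolding is_join_def by (intro ub) auto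
  ultimately show "invs z = ?U" by (rule subset_antisym)
qed

lemma meet_char:
  assumes "x \<in> perms n" "y \<in> perms n"
  shows "is_meet n x y (realize n (DD n - ((DD n - invs x) \<union> (DD n - invs y))\<^sup>+))"
    and "is_meet n x y z \<Longrightarrow> invs z = DD n - ((DD n - invs x) \<union> (DD n - invs y))\<^sup>+"
proof -
  let ?V = "((DD n - invs x) \<union> (DD n - invs y))\<^sup>+"
  have gV: "good n ?V" using good_Un_trancl good_compl good_invs assms by blast
  have g: "good n (DD n - ?V)" using good_compl[OF gV] .
  note r = realize[OF g]
  have xD: "invs x \<subseteq> DD n" "invs y \<subseteq> DD n" using good_invs assms unfolding good_def by auto
  have lb: "invs w \<subseteq> DD n - ?V" if "w \<in> perms n" "weak_le w x" "weak_le w y" for w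
  proof -
    have "good n (DD n - invs w)" using good_compl good_invs that(1) by blast
    then have "trans (DD n - invs w)" unfolding good_def by auto
    moreover have "(DD n - invs x) \<union> (DD n - invs y) \<subseteq> DD n - invs w"
      using that unfolding weak_le_def by auto
    ultimately have "?V \<subseteq> DD n - invs w" by (simp add: trancl_sub)
    moreover have "invs w \<subseteq> DD n" using good_invs[OF that(1)] unfolding good_def by auto
    ultimately show ?thesis by auto
  qed
  have "(DD n - invs x) \<union> (DD n - invs y) \<subseteq> ?V" by (rule subrelI) (erule r_into_trancl)
  then have "DD n - ?V \<subseteq> invs x" "DD n - ?V \<subseteq> invs y" by blast+
  then have xv: "DD n - ?V \<subseteq> invs x" "DD n - ?V \<subseteq> invs y" .
  show j: "is_meet n x y (realize n (DD n - ?V))"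
    unfolding is_meet_def
  proof (intro conjI ballI impI)
    show "realize n (DD n - ?V) \<in> perms n" using r by simp
    show "weak_le (realize n (DD n - ?V)) x" "weak_le (realize n (DD n - ?V)) y"
      unfolding weak_le_def using r xv by simp_all
    fix w assume "w \<in> perms n" "weak_le w x \<and> weak_le w y"
    then show "weak_le w (realize n (DD n - ?V))" using lb[of w] r by (simp add: weak_le_def)
  qed
  assume jz: "is_meet n x y z"
  have A: "\<forall>w\<in>perms n. weak_le w x \<and> weak_le w y \<longrightarrow> weak_le w z" using jz unfolding is_meet_def by blast
  have "weak_le (realize n (DD n - ?V)) z"
    by (rule A[rule_format]) (use j in \<open>auto simp: is_meet_def\<close>)
  then have "DD n - ?V \<subseteq> invs z" using r unfolding weak_le_def by simp
  moreover have "invs z \<subseteq> DD n - ?V" using jz unfolding is_meet_def by (intro lb) auto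
  ultimately show "invs z = DD n - ?V" by (intro subset_antisym) assumption+
qed



definition des :: "nat list \<Rightarrow> nat set" where
  "des m = {i. Suc i < length m \<and> m ! Suc i < m ! i}"
definition asc :: "nat list \<Rightarrow> nat set" where
  "asc m = {i. Suc i < length m \<and> m ! i < m ! Suc i}"

lemma bef_nth: "i < j \<Longrightarrow> j < length xs \<Longrightarrow> bef xs (xs ! i) (xs ! j)"
  unfolding bef_def by blast

lemma adjA:
  assumes "distinct xs" "Suc i < length xs" "bef xs (xs ! i) z" "z \<noteq> xs ! Suc i"
  shows "bef xs (xs ! Suc i) z"
proof -
  obtain i' j where h: "i' < j" "j < length xs" "xs ! i' = xs ! i" "xs ! j = z"
    using assms(3) unfolding bef_def by blast
  have "i' = i" using h assms(1,2) nth_eq_iff_index_eq by fastforce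
  then have "Suc i < j" using h assms(4) by (metis Suc_lessI)
  then show ?thesis using h bef_nth by metis
qed

lemma adjB:
  assumes "distinct xs" "Suc i < length xs" "bef xs z (xs ! Suc i)" "z \<noteq> xs ! i"
  shows "bef xs z (xs ! i)"
proof -
  obtain i' j where h: "i' < j" "j < length xs" "xs ! i' = z" "xs ! j = xs ! Suc i"
    using assms(3) unfolding bef_def by blast
  have "j = Suc i" using h assms(1,2) nth_eq_iff_index_eq by fastforce
  then have "i' < i" using h assms(4) by (metis less_Suc_eq)
  then show ?thesis using h bef_nth assms(2) by (metis Suc_lessD)
qed

lemma perm_nth_in: "m \<in> perms n \<Longrightarrow> i < n \<Longrightarrow> m ! i \<in> {1..n}"
  using perms_D nth_mem by metis

lemma good_del:
  assumes m: "m \<in> perms n" and i: "i \<in> des m"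
  shows "good n (invs m - {(m ! i, m ! Suc i)})"
proof -
  let ?x = "m ! i" and ?y = "m ! Suc i"
  have dm: "distinct m" "length m = n" using perms_D[OF m] by auto
  have si: "Suc i < length m" "?y < ?x" using i unfolding des_def by auto
  have bxy: "bef m ?x ?y" using bef_nth si by blast
  have gm: "good n (invs m)" using good_invs[OF m] .
  have cm: "cotr (invs m)" using gm unfolding good_def by auto
  show ?thesis unfolding good_def
  proof (intro conjI)
    show "invs m - {(?x, ?y)} \<subseteq> DD n" using gm unfolding good_def by auto
    show "trans (invs m - {(?x, ?y)})"
      unfolding trans_def
    proof (intro allI impI)
      fix a b c assume h: "(a,b) \<in> invs m - {(?x, ?y)}" "(b,c) \<in> invs m - {(?x, ?y)}"
      then have "(a,c) \<in> invs m" using gm unfolding good_def trans_def by blast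
      moreover have "(a,c) \<noteq> (?x,?y)"
      proof
        assume ac: "(a,c) = (?x,?y)"
        have "bef m ?x b" "b \<noteq> ?y" using h ac by (auto simp: invs_bef)
        then have "bef m ?y b" using adjA dm si by blast
        moreover have "bef m b ?y" using h ac by (auto simp: invs_bef)
        ultimately show False using bef_asym dm by blast
      qed
      ultimately show "(a,c) \<in> invs m - {(?x, ?y)}" by blast
    qed
    show "cotr (invs m - {(?x, ?y)})"
      unfolding cotr_def
    proof (intro allI impI)
      fix a b c assume h: "(a,c) \<in> invs m - {(?x, ?y)}" "c < b" "b < a"
      then have "(a,b) \<in> invs m \<or> (b,c) \<in> invs m" using cm unfolding cotr_def by blast
      then show "(a,b) \<in> invs m - {(?x, ?y)} \<or> (b,c) \<in> invs m - {(?x, ?y)}"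
      proof
        assume ab: "(a,b) \<in> invs m"
        show ?thesis
        proof (cases "(a,b) = (?x,?y)")
          case False then show ?thesis using ab by blast
        next
          case True
          have "bef m ?x c" "c \<noteq> ?y" using h True by (auto simp: invs_bef)
          then have "bef m ?y c" using adjA dm si by blast
          then have "(b,c) \<in> invs m" using True h by (auto simp: invs_bef)
          moreover have "b \<noteq> ?x" using True si by auto
          ultimately show ?thesis by blast
        qed
      next
        assume bc: "(b,c) \<in> invs m"
        show ?thesis
        proof (cases "(b,c) = (?x,?y)")
          case False then show ?thesis using bc by blast
        next
          case True
          have "bef m a ?y" "a \<noteq> ?x" using h True by (auto simp: invs_bef)
          then have "bef m a ?x" using adjB dm si by blast
          then have "(a,b) \<in> invs m" using True h by (auto simp: invs_bef)
          moreover have "a \<noteq> ?x" using True h by auto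
          ultimately show ?thesis by blast
        qed
      qed
    qed
  qed
qed

lemma good_add:
  assumes M: "M \<in> perms n" and i: "i \<in> asc M"
  shows "good n (invs M \<union> {(M ! Suc i, M ! i)})"
proof -
  let ?x = "M ! i" and ?y = "M ! Suc i"
  have dm: "distinct M" "length M = n" using perms_D[OF M] by auto
  have si: "Suc i < length M" "?x < ?y" using i unfolding asc_def by auto
  have bxy: "bef M ?x ?y" using bef_nth si by blast
  have gm: "good n (invs M)" using good_invs[OF M] .
  have cm: "cotr (invs M)" using gm unfolding good_def by auto
  have tm: "trans (invs M)" using gm unfolding good_def by auto
  have xin: "?x \<in> {1..n}" "?y \<in> {1..n}" using perm_nth_in[OF M] si dm by auto
  show ?thesis unfolding good_def
  proof (intro conjI)
    show "invs M \<union> {(?y, ?x)} \<subseteq> DD n" using gm xin si unfolding good_def DD_def by auto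
    show "trans (invs M \<union> {(?y, ?x)})"
      unfolding trans_def
    proof (intro allI impI)
      fix a b c assume h: "(a,b) \<in> invs M \<union> {(?y, ?x)}" "(b,c) \<in> invs M \<union> {(?y, ?x)}"
      consider "(a,b) \<in> invs M" "(b,c) \<in> invs M" | "(a,b) = (?y,?x)" "(b,c) \<in> invs M"
        | "(a,b) \<in> invs M" "(b,c) = (?y,?x)" | "(a,b) = (?y,?x)" "(b,c) = (?y,?x)" using h by blast
      then show "(a,c) \<in> invs M \<union> {(?y, ?x)}"
      proof cases
        case 1 then show ?thesis using tm unfolding trans_def by blast
      next
        case 2
        have "bef M ?x c" "c < ?x" using 2 by (auto simp: invs_bef)
        then have "bef M ?y c" using adjA[OF dm(1) si(1)] si(2) by auto
        then show ?thesis using 2 \<open>c < ?x\<close> si by (auto simp: invs_bef)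
      next
        case 3
        have "bef M a ?y" "?y < a" using 3 by (auto simp: invs_bef)
        then have "bef M a ?x" using adjB[OF dm(1) si(1)] si(2) by auto
        then show ?thesis using 3 \<open>?y < a\<close> si by (auto simp: invs_bef)
      next
        case 4 then show ?thesis using si by auto
      qed
    qed
    show "cotr (invs M \<union> {(?y, ?x)})"
      unfolding cotr_def
    proof (intro allI impI)
      fix a b c assume h: "(a,c) \<in> invs M \<union> {(?y, ?x)}" "c < b" "b < a"
      show "(a,b) \<in> invs M \<union> {(?y, ?x)} \<or> (b,c) \<in> invs M \<union> {(?y, ?x)}"
      proof (cases "(a,c) \<in> invs M")
        case True then show ?thesis using cm h unfolding cotr_def by blast
      next
        case False
        then have ac: "a = ?y" "c = ?x" using h by auto
        then have "b \<in> set M" using xin h dm perms_D[OF M] by auto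
        moreover have "b \<noteq> ?x" "b \<noteq> ?y" using ac h by auto
        moreover have "?x \<in> set M" using xin perms_D[OF M] by auto
        ultimately have "bef M ?x b \<or> bef M b ?x" using bef_total by metis
        then show ?thesis
        proof
          assume "bef M ?x b"
          then have "bef M ?y b" using adjA[OF dm(1) si(1)] \<open>b \<noteq> ?y\<close> by auto
          then show ?thesis using ac h by (auto simp: invs_bef)
        next
          assume "bef M b ?x"
          then show ?thesis using ac h by (auto simp: invs_bef)
        qed
      qed
    qed
  qed
qed

lemma nth_invs: "i < j \<Longrightarrow> j < length m \<Longrightarrow> (m ! i, m ! j) \<in> invs m \<longleftrightarrow> m ! j < m ! i"
  using bef_nth by (auto simp: invs_bef)

lemma nth_not_invs: "distinct m \<Longrightarrow> i < j \<Longrightarrow> j < length m \<Longrightarrow> (m ! j, m ! i) \<notin> invs m"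
  using bef_nth bef_asym by (auto simp: invs_bef)

lemma descent_lemma:
  assumes u: "u \<in> perms n" and m: "m \<in> perms n" and lt: "weak_less u m"
  shows "\<exists>i\<in>des m. (m ! i, m ! Suc i) \<notin> invs u"
proof (rule ccontr)
  assume "\<not> ?thesis"
  then have H: "\<And>i. i \<in> des m \<Longrightarrow> (m ! i, m ! Suc i) \<in> invs u" by blast
  have dm: "distinct m" "length m = n" using perms_D[OF m] by auto
  have sub: "invs u \<subseteq> invs m" using lt unfolding weak_less_def weak_le_def by auto
  have gu: "trans (invs u)" "cotr (invs u)" using good_invs[OF u] unfolding good_def by auto
  have key: "\<forall>i. i + Suc d < length m \<longrightarrow> m ! (i + Suc d) < m ! i \<longrightarrow> (m ! i, m ! (i + Suc d)) \<in> invs u" for d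
  proof (induction d)
    case 0
    then show ?case using H unfolding des_def by auto
  next
    case (Suc d)
    show ?case
    proof (intro allI impI)
      fix i assume h: "i + Suc (Suc d) < length m" "m ! (i + Suc (Suc d)) < m ! i"
      let ?k = "Suc i" and ?j = "i + Suc (Suc d)"
      have kj: "?k + Suc d = ?j" by simp
      have ne: "m ! ?k \<noteq> m ! i" "m ! ?k \<noteq> m ! ?j" using dm h nth_eq_iff_index_eq by fastforce+
      show "(m ! i, m ! ?j) \<in> invs u"
      proof (cases "m ! ?k < m ! i")
        case True
        then have ik: "(m ! i, m ! ?k) \<in> invs u" using H h unfolding des_def by auto
        show ?thesis
        proof (cases "m ! ?j < m ! ?k")
          case True
          then have "(m ! ?k, m ! ?j) \<in> invs u" using Suc.IH h kj by metis
          then show ?thesis using ik gu unfolding trans_def by blast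
        next
          case False
          then have "m ! ?k < m ! ?j" using ne by auto
          then have "(m ! i, m ! ?j) \<in> invs u \<or> (m ! ?j, m ! ?k) \<in> invs u"
            using gu(2) ik h unfolding cotr_def by blast
          moreover have "(m ! ?j, m ! ?k) \<notin> invs m" using nth_not_invs[OF dm(1)] h by simp
          ultimately show ?thesis using sub by blast
        qed
      next
        case False
        then have "m ! i < m ! ?k" using ne by auto
        then have "(m ! ?k, m ! ?j) \<in> invs u" using Suc.IH h kj by (metis order.strict_trans)
        then have "(m ! ?k, m ! i) \<in> invs u \<or> (m ! i, m ! ?j) \<in> invs u"
          using gu(2) h \<open>m ! i < m ! ?k\<close> unfolding cotr_def by blast
        moreover have "(m ! ?k, m ! i) \<notin> invs m" using nth_not_invs[OF dm(1)] h by simp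
        ultimately show ?thesis using sub by blast
      qed
    qed
  qed
  have "invs m \<subseteq> invs u"
  proof
    fix p assume "p \<in> invs m"
    then obtain i j where ij: "i < j" "j < length m" "p = (m ! i, m ! j)" "m ! j < m ! i"
      unfolding invs_def by blast
    obtain d where "j = i + Suc d" using less_imp_Suc_add[OF ij(1)] by auto
    then show "p \<in> invs u" using key[of d] ij by auto
  qed
  then show False using lt sub invs_inj[OF u m] unfolding weak_less_def by auto
qed

lemma ascent_lemma:
  assumes u: "u \<in> perms n" and M: "M \<in> perms n" and lt: "weak_less M u"
  shows "\<exists>i\<in>asc M. (M ! Suc i, M ! i) \<in> invs u"
proof (rule ccontr)
  assume "\<not> ?thesis"
  then have H: "\<And>i. i \<in> asc M \<Longrightarrow> (M ! Suc i, M ! i) \<notin> invs u" by blast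
  have dm: "distinct M" "length M = n" using perms_D[OF M] by auto
  have sub: "invs M \<subseteq> invs u" using lt unfolding weak_less_def weak_le_def by auto
  have gu: "trans (invs u)" "cotr (invs u)" using good_invs[OF u] unfolding good_def by auto
  have key: "\<forall>i. i + Suc d < length M \<longrightarrow> M ! i < M ! (i + Suc d) \<longrightarrow> (M ! (i + Suc d), M ! i) \<notin> invs u" for d
  proof (induction d)
    case 0
    then show ?case using H unfolding asc_def by auto
  next
    case (Suc d)
    show ?case
    proof (intro allI impI)
      fix i assume h: "i + Suc (Suc d) < length M" "M ! i < M ! (i + Suc (Suc d))"
      let ?k = "Suc i" and ?j = "i + Suc (Suc d)"
      have kj: "?k + Suc d = ?j" by simp
      have ne: "M ! ?k \<noteq> M ! i" "M ! ?k \<noteq> M ! ?j" using dm h nth_eq_iff_index_eq by fastforce+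
      show "(M ! ?j, M ! i) \<notin> invs u"
      proof (cases "M ! i < M ! ?k")
        case True
        then have ik: "(M ! ?k, M ! i) \<notin> invs u" using H h unfolding asc_def by auto
        show ?thesis
        proof (cases "M ! ?k < M ! ?j")
          case True
          then have "(M ! ?j, M ! ?k) \<notin> invs u" using Suc.IH h kj by metis
          then show ?thesis using ik gu(2) True \<open>M ! i < M ! ?k\<close> unfolding cotr_def by blast
        next
          case False
          then have "M ! ?j < M ! ?k" using ne by auto
          then have "(M ! ?k, M ! ?j) \<in> invs M" using nth_invs h by simp
          then show ?thesis using sub ik gu(1) unfolding trans_def by blast
        qed
      next
        case False
        then have "M ! ?k < M ! i" using ne by auto
        then have "(M ! ?j, M ! ?k) \<notin> invs u" using Suc.IH h kj by (metis order.strict_trans)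
        moreover have "(M ! i, M ! ?k) \<in> invs M" using nth_invs h \<open>M ! ?k < M ! i\<close> by simp
        ultimately show ?thesis using sub gu(1) unfolding trans_def by blast
      qed
    qed
  qed
  have "invs u \<subseteq> invs M"
  proof
    fix p assume pu: "p \<in> invs u"
    obtain a c where p: "p = (a,c)" by (cases p)
    have "(a,c) \<in> DD n" using pu p good_invs[OF u] unfolding good_def by auto
    then have ac: "a \<in> set M" "c \<in> set M" "c < a" using perms_D[OF M] unfolding DD_def by auto
    then have "bef M a c \<or> bef M c a" using bef_total by (metis less_irrefl)
    then show "p \<in> invs M"
    proof
      assume "bef M a c" then show ?thesis using p ac by (auto simp: invs_bef)
    next
      assume "bef M c a"
      then obtain i j where ij: "i < j" "j < length M" "M ! i = c" "M ! j = a" unfolding bef_def by blast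
      obtain d where "j = i + Suc d" using less_imp_Suc_add[OF ij(1)] by auto
      then have "(a, c) \<notin> invs u" using key[of d] ij ac by auto
      then show ?thesis using pu p by auto
    qed
  qed
  then show False using lt sub invs_inj[OF u M] unfolding weak_less_def by auto
qed



lemma cong_equiv: "lattice_congruence n R \<Longrightarrow> equiv (perms n) R"
  unfolding lattice_congruence_def by blast

lemma cong_join: "lattice_congruence n R \<Longrightarrow> (x,x') \<in> R \<Longrightarrow> (y,y') \<in> R \<Longrightarrow> is_join n x y z
   \<Longrightarrow> is_join n x' y' z' \<Longrightarrow> (z,z') \<in> R"
  unfolding lattice_congruence_def by blast

lemma cong_meet: "lattice_congruence n R \<Longrightarrow> (x,x') \<in> R \<Longrightarrow> (y,y') \<in> R \<Longrightarrow> is_meet n x y z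
   \<Longrightarrow> is_meet n x' y' z' \<Longrightarrow> (z,z') \<in> R"
  unfolding lattice_congruence_def by blast

lemma join_ex: "x \<in> perms n \<Longrightarrow> y \<in> perms n \<Longrightarrow> \<exists>z. is_join n x y z"
  using join_char(1) by blast

lemma meet_ex: "x \<in> perms n \<Longrightarrow> y \<in> perms n \<Longrightarrow> \<exists>z. is_meet n x y z"
  using meet_char(1) by blast

lemma is_join_le: "x \<in> perms n \<Longrightarrow> y \<in> perms n \<Longrightarrow> weak_le x y \<Longrightarrow> is_join n x y y"
  unfolding is_join_def weak_le_def by auto

lemma is_meet_le: "x \<in> perms n \<Longrightarrow> y \<in> perms n \<Longrightarrow> weak_le x y \<Longrightarrow> is_meet n x y x"
  unfolding is_meet_def weak_le_def by auto

lemma class_R: "equiv A R \<Longrightarrow> X \<in> A//R \<Longrightarrow> x \<in> X \<Longrightarrow> y \<in> X \<Longrightarrow> (x,y) \<in> R"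
  using quotient_eq_iff[of A R X X x y] by simp

lemma class_eq: "equiv A R \<Longrightarrow> X \<in> A//R \<Longrightarrow> x \<in> X \<Longrightarrow> X = R``{x}"
  by (metis Image_singleton_iff equiv_class_eq quotientE)

lemma class_in: "equiv A R \<Longrightarrow> x \<in> A \<Longrightarrow> x \<in> R``{x} \<and> R``{x} \<in> A//R"
  using equiv_class_self quotientI by metis

lemma class_sub: "equiv A R \<Longrightarrow> X \<in> A//R \<Longrightarrow> X \<subseteq> A"
  using in_quotient_imp_subset by blast

lemma class_same: "equiv A R \<Longrightarrow> X \<in> A//R \<Longrightarrow> Y \<in> A//R \<Longrightarrow> x \<in> X \<Longrightarrow> x \<in> Y \<Longrightarrow> X = Y"
  using quotient_eq_iff[of A R X Y x x] class_R by metis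

lemma finite_invs: "p \<in> perms n \<Longrightarrow> finite (invs p)"
  using good_invs[of p n] finite_DD[of n] finite_subset unfolding good_def by blast

lemma class_min:
  assumes cong: "lattice_congruence n R" and X: "X \<in> perms n // R"
  shows "\<exists>m\<in>X. \<forall>x\<in>X. weak_le m x"
proof -
  have E: "equiv (perms n) R" using cong_equiv[OF cong] .
  have Xs: "X \<subseteq> perms n" using class_sub[OF E X] .
  obtain x0 where "x0 \<in> X" using X E by (metis equiv_class_self quotientE)
  then obtain m where m: "m \<in> X" "\<And>y. y \<in> X \<Longrightarrow> card (invs m) \<le> card (invs y)"
    using ex_has_least_nat[of "\<lambda>x. x \<in> X" x0 "\<lambda>x. card (invs x)"] by blast
  have mp: "m \<in> perms n" using m Xs by auto
  have "weak_le m x" if x: "x \<in> X" for x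
  proof -
    have xp: "x \<in> perms n" using x Xs by auto
    obtain z where z: "is_meet n m x z" using meet_ex[OF mp xp] by blast
    have "(m,m) \<in> R" "(x,m) \<in> R" using class_R[OF E X] m x by auto
    moreover have "is_meet n m m m" using is_meet_le[OF mp mp] unfolding weak_le_def by simp
    ultimately have "(z,m) \<in> R" using cong_meet[OF cong] z by blast
    then have zX: "z \<in> X" using class_eq[OF E X m(1)] E unfolding equiv_def sym_def by blast
    have zp: "z \<in> perms n" and zm: "invs z \<subseteq> invs m" and zx: "weak_le z x"
      using z unfolding is_meet_def weak_le_def by auto
    have "card (invs m) \<le> card (invs z)" using m(2) zX by blast
    then have "invs z = invs m" using card_seteq[OF finite_invs[OF mp] zm] by blast
    then have "z = m" using invs_inj[OF zp mp] by blast
    then show ?thesis using zx by simp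
  qed
  then show ?thesis using m(1) by blast
qed

lemma class_max:
  assumes cong: "lattice_congruence n R" and X: "X \<in> perms n // R"
  shows "\<exists>M\<in>X. \<forall>x\<in>X. weak_le x M"
proof -
  have E: "equiv (perms n) R" using cong_equiv[OF cong] .
  have Xs: "X \<subseteq> perms n" using class_sub[OF E X] .
  obtain x0 where "x0 \<in> X" using X E by (metis equiv_class_self quotientE)
  then obtain M where m: "M \<in> X" "\<And>y. y \<in> X \<Longrightarrow> card (DD n - invs M) \<le> card (DD n - invs y)"
    using ex_has_least_nat[of "\<lambda>x. x \<in> X" x0 "\<lambda>x. card (DD n - invs x)"] by blast
  have mp: "M \<in> perms n" using m Xs by auto
  have "weak_le x M" if x: "x \<in> X" for x
  proof -
    have xp: "x \<in> perms n" using x Xs by auto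
    obtain z where z: "is_join n M x z" using join_ex[OF mp xp] by blast
    have "(M,M) \<in> R" "(x,M) \<in> R" using class_R[OF E X] m x by auto
    moreover have "is_join n M M M" using is_join_le[OF mp mp] unfolding weak_le_def by simp
    ultimately have "(z,M) \<in> R" using cong_join[OF cong] z by blast
    then have zX: "z \<in> X" using class_eq[OF E X m(1)] E unfolding equiv_def sym_def by blast
    have zp: "z \<in> perms n" and zm: "invs M \<subseteq> invs z" and zx: "weak_le x z"
      using z unfolding is_join_def weak_le_def by auto
    have "card (DD n - invs M) \<le> card (DD n - invs z)" using m(2) zX by blast
    moreover have "DD n - invs z \<subseteq> DD n - invs M" using zm by blast
    ultimately have "DD n - invs z = DD n - invs M" using card_seteq[OF finite_Diff[OF finite_DD]] by blast
    moreover have "invs z \<subseteq> DD n" "invs M \<subseteq> DD n" using good_invs zp mp unfolding good_def by auto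
    ultimately have "invs z = invs M" by blast
    then have "z = M" using invs_inj[OF zp mp] by blast
    then show ?thesis using zx by simp
  qed
  then show ?thesis using m(1) by blast
qed

lemma cover_down:
  assumes cong: "lattice_congruence n R" and X: "X \<in> perms n // R"
    and m: "m \<in> X" "\<forall>x\<in>X. weak_le m x" and cov: "qcovers n R Y X"
  shows "\<exists>i\<in>des m. Y = R``{realize n (invs m - {(m ! i, m ! Suc i)})}"
proof -
  have E: "equiv (perms n) R" using cong_equiv[OF cong] .
  have Y: "Y \<in> perms n // R" and ql: "qless Y X" and nz: "\<not> (\<exists>Z\<in>perms n // R. qless Y Z \<and> qless Z X)"
    using cov unfolding qcovers_def by auto
  obtain y x' where yx: "y \<in> Y" "x' \<in> X" "weak_less y x'" and YX: "Y \<noteq> X"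
    using ql unfolding qless_def by blast
  have yp: "y \<in> perms n" and xp: "x' \<in> perms n" and mp: "m \<in> perms n"
    using yx m class_sub[OF E X] class_sub[OF E Y] by auto
  obtain u where u: "is_meet n y m u" using meet_ex[OF yp mp] by blast
  have "is_meet n y x' y" using is_meet_le[OF yp xp] yx(3) unfolding weak_less_def by blast
  moreover have "(y,y) \<in> R" "(x',m) \<in> R" using class_R[OF E X] class_R[OF E Y] yx m by auto
  ultimately have "(y,u) \<in> R" using cong_meet[OF cong] u by blast
  then have uY: "u \<in> Y" using class_eq[OF E Y yx(1)] by blast
  have up: "u \<in> perms n" and ule: "weak_le u m" using u unfolding is_meet_def by auto
  have "u \<noteq> m" using class_same[OF E X Y] m(1) uY YX by blast
  then have "weak_less u m" using ule unfolding weak_less_def by simp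
  then obtain i where i: "i \<in> des m" "(m ! i, m ! Suc i) \<notin> invs u" using descent_lemma[OF up mp] by blast
  let ?e = "(m ! i, m ! Suc i)"
  define c where "c = realize n (invs m - {?e})"
  have c: "c \<in> perms n" "invs c = invs m - {?e}" using realize[OF good_del[OF mp i(1)]] c_def by auto
  have em: "?e \<in> invs m" using i(1) nth_invs[of i "Suc i" m] unfolding des_def by auto
  have uc: "weak_le u c" using ule i(2) c(2) unfolding weak_le_def by auto
  have cm: "weak_less c m" using c em unfolding weak_less_def weak_le_def by auto
  let ?C = "R``{c}"
  have C: "c \<in> ?C" "?C \<in> perms n // R" using class_in[OF E c(1)] by auto
  show ?thesis
  proof (rule bexI[OF _ i(1)], rule ccontr)
    assume YC: "Y \<noteq> R``{realize n (invs m - {?e})}"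
    then have YC': "Y \<noteq> ?C" using c_def by simp
    have "u \<noteq> c" using class_same[OF E Y C(2)] uY C(1) YC' by blast
    then have q1: "qless Y ?C" using YC' uY C(1) uc unfolding qless_def weak_less_def by blast
    have "?C \<noteq> X"
    proof
      assume "?C = X"
      then have "weak_le m c" using m(2) C(1) by blast
      then show False using cm weak_le_antisym[OF c(1) mp] unfolding weak_less_def by blast
    qed
    then have q2: "qless ?C X" using C(1) m(1) cm unfolding qless_def by blast
    show False using nz q1 q2 C(2) by blast
  qed
qed

lemma cover_up:
  assumes cong: "lattice_congruence n R" and X: "X \<in> perms n // R"
    and M: "M \<in> X" "\<forall>x\<in>X. weak_le x M" and cov: "qcovers n R X Y"
  shows "\<exists>i\<in>asc M. Y = R``{realize n (invs M \<union> {(M ! Suc i, M ! i)})}"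
proof -
  have E: "equiv (perms n) R" using cong_equiv[OF cong] .
  have Y: "Y \<in> perms n // R" and ql: "qless X Y" and nz: "\<not> (\<exists>Z\<in>perms n // R. qless X Z \<and> qless Z Y)"
    using cov unfolding qcovers_def by auto
  obtain y x' where yx: "y \<in> Y" "x' \<in> X" "weak_less x' y" and YX: "X \<noteq> Y"
    using ql unfolding qless_def by blast
  have yp: "y \<in> perms n" and xp: "x' \<in> perms n" and mp: "M \<in> perms n"
    using yx M class_sub[OF E X] class_sub[OF E Y] by auto
  obtain u where u: "is_join n M y u" using join_ex[OF mp yp] by blast
  have "is_join n x' y y" using is_join_le[OF xp yp] yx(3) unfolding weak_less_def by blast
  moreover have "(y,y) \<in> R" "(x',M) \<in> R" using class_R[OF E X] class_R[OF E Y] yx M by auto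
  ultimately have "(y,u) \<in> R" using cong_join[OF cong] u by blast
  then have uY: "u \<in> Y" using class_eq[OF E Y yx(1)] by blast
  have up: "u \<in> perms n" and ule: "weak_le M u" using u unfolding is_join_def by auto
  have "u \<noteq> M" using class_same[OF E X Y] M(1) uY YX by blast
  then have "weak_less M u" using ule unfolding weak_less_def by simp
  then obtain i where i: "i \<in> asc M" "(M ! Suc i, M ! i) \<in> invs u" using ascent_lemma[OF up mp] by blast
  let ?e = "(M ! Suc i, M ! i)"
  define c where "c = realize n (invs M \<union> {?e})"
  have c: "c \<in> perms n" "invs c = invs M \<union> {?e}" using realize[OF good_add[OF mp i(1)]] c_def by auto
  have em: "?e \<notin> invs M" using i(1) nth_not_invs[of M i "Suc i"] perms_D[OF mp] unfolding asc_def by auto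
  have uc: "weak_le c u" using ule i(2) c(2) unfolding weak_le_def by auto
  have cm: "weak_less M c" using c em unfolding weak_less_def weak_le_def by auto
  let ?C = "R``{c}"
  have C: "c \<in> ?C" "?C \<in> perms n // R" using class_in[OF E c(1)] by auto
  show ?thesis
  proof (rule bexI[OF _ i(1)], rule ccontr)
    assume YC: "Y \<noteq> R``{realize n (invs M \<union> {?e})}"
    then have YC': "Y \<noteq> ?C" using c_def by simp
    have "u \<noteq> c" using class_same[OF E Y C(2)] uY C(1) YC' by blast
    then have q1: "qless ?C Y" using YC' uY C(1) uc unfolding qless_def weak_less_def by blast
    have "?C \<noteq> X"
    proof
      assume "?C = X"
      then have "weak_le c M" using M(2) C(1) by blast
      then show False using cm weak_le_antisym[OF c(1) mp] unfolding weak_less_def by blast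
    qed
    then have q2: "qless X ?C" using C(1) M(1) cm unfolding qless_def by blast
    show False using nz q1 q2 C(2) by blast
  qed
qed

lemma finite_des: "finite (des m)" "finite (asc m)"
  unfolding des_def asc_def by (rule finite_subset[of _ "{..<length m}"], auto)+

lemma degree_le:
  assumes cong: "lattice_congruence n R" and X: "X \<in> perms n // R"
  shows "\<exists>m M. m \<in> X \<and> M \<in> X \<and> weak_le m M \<and> qdegree n R X \<le> card (des m) + card (asc M)"
proof -
  obtain m where m: "m \<in> X" "\<forall>x\<in>X. weak_le m x" using class_min[OF cong X] by blast
  obtain M where M: "M \<in> X" "\<forall>x\<in>X. weak_le x M" using class_max[OF cong X] by blast
  let ?f = "\<lambda>i. R``{realize n (invs m - {(m ! i, m ! Suc i)})}"
  let ?g = "\<lambda>i. R``{realize n (invs M \<union> {(M ! Suc i, M ! i)})}"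
  have "{Y \<in> perms n // R. qcovers n R X Y \<or> qcovers n R Y X} \<subseteq> ?f ` des m \<union> ?g ` asc M"
  proof
    fix Y assume "Y \<in> {Y \<in> perms n // R. qcovers n R X Y \<or> qcovers n R Y X}"
    then have "qcovers n R X Y \<or> qcovers n R Y X" by blast
    then show "Y \<in> ?f ` des m \<union> ?g ` asc M"
    proof
      assume "qcovers n R X Y"
      then show ?thesis using cover_up[OF cong X M] by blast
    next
      assume "qcovers n R Y X"
      then show ?thesis using cover_down[OF cong X m] by blast
    qed
  qed
  then have "qdegree n R X \<le> card (?f ` des m \<union> ?g ` asc M)"
    unfolding qdegree_def using finite_des by (intro card_mono) auto
  also have "\<dots> \<le> card (?f ` des m) + card (?g ` asc M)" by (rule card_Un_le)
  also have "\<dots> \<le> card (des m) + card (asc M)" by (intro add_mono card_image_le finite_des)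
  finally show ?thesis using m M by blast
qed



definition pos :: "nat list \<Rightarrow> nat \<Rightarrow> nat" where
  "pos xs v = (THE i. i < length xs \<and> xs ! i = v)"

lemma pos: assumes "distinct xs" "v \<in> set xs" shows "pos xs v < length xs \<and> xs ! pos xs v = v"
proof -
  obtain i where i: "i < length xs" "xs ! i = v" using assms(2) by (auto simp: in_set_conv_nth)
  have u: "\<And>j. j < length xs \<and> xs ! j = v \<Longrightarrow> j = i" using nth_eq_iff_index_eq[OF assms(1) _ i(1)] i(2) by auto
  have "pos xs v = i" unfolding pos_def
  proof (rule the_equality)
    show "i < length xs \<and> xs ! i = v" using i by simp
  next
    fix j assume "j < length xs \<and> xs ! j = v" then show "j = i" by (rule u)
  qed
  then show ?thesis using i by simp
qed

lemma pos_nth: "distinct xs \<Longrightarrow> i < length xs \<Longrightarrow> pos xs (xs ! i) = i"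
  using pos[of xs "xs ! i"] nth_eq_iff_index_eq by (metis nth_mem)

lemma bef_pos: "distinct xs \<Longrightarrow> bef xs a b \<Longrightarrow> pos xs a < pos xs b"
  unfolding bef_def using pos_nth by (metis order.strict_trans)

lemma no_between:
  fixes S :: "nat set"
  assumes "finite S" "i < i'" "card {k\<in>S. k < i} = card {k\<in>S. k < i'}"
  shows "\<And>k. i \<le> k \<Longrightarrow> k < i' \<Longrightarrow> k \<notin> S"
proof -
  have "{k\<in>S. k < i} \<subseteq> {k\<in>S. k < i'}" using assms(2) by auto
  then have "{k\<in>S. k < i} = {k\<in>S. k < i'}" using assms(1,3) by (intro card_subset_eq) auto
  then show "\<And>k. i \<le> k \<Longrightarrow> k < i' \<Longrightarrow> k \<notin> S" by (metis (mono_tags, lifting) mem_Collect_eq not_le)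
qed

lemma run_dec:
  fixes xs :: "nat list"
  assumes d: "distinct xs" and ii: "i < i'" "i' < length xs"
    and na: "\<And>k. i \<le> k \<Longrightarrow> k < i' \<Longrightarrow> \<not> xs ! k < xs ! Suc k"
  shows "xs ! i' < xs ! i"
proof -
  have "i + Suc e \<le> i' \<Longrightarrow> xs ! (i + Suc e) < xs ! i" for e
  proof (induction e)
    case 0
    have "xs ! i \<noteq> xs ! Suc i" using d ii 0 nth_eq_iff_index_eq by fastforce
    then show ?case using na[of i] 0 by auto
  next
    case (Suc e)
    let ?k = "i + Suc e"
    have "xs ! ?k \<noteq> xs ! Suc ?k" using d ii Suc.prems nth_eq_iff_index_eq by fastforce
    then have "xs ! Suc ?k < xs ! ?k" using na[of ?k] Suc.prems by auto
    then show ?case using Suc by auto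
  qed
  then show ?thesis using ii less_imp_Suc_add[OF ii(1)] by (metis add_Suc_right order_refl)
qed

lemma run_inc:
  fixes xs :: "nat list"
  assumes d: "distinct xs" and ii: "i < i'" "i' < length xs"
    and na: "\<And>k. i \<le> k \<Longrightarrow> k < i' \<Longrightarrow> \<not> xs ! Suc k < xs ! k"
  shows "xs ! i < xs ! i'"
proof -
  have "i + Suc e \<le> i' \<Longrightarrow> xs ! i < xs ! (i + Suc e)" for e
  proof (induction e)
    case 0
    have "xs ! i \<noteq> xs ! Suc i" using d ii 0 nth_eq_iff_index_eq by fastforce
    then show ?case using na[of i] 0 by auto
  next
    case (Suc e)
    let ?k = "i + Suc e"
    have "xs ! ?k \<noteq> xs ! Suc ?k" using d ii Suc.prems nth_eq_iff_index_eq by fastforce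
    then have "xs ! ?k < xs ! Suc ?k" using na[of ?k] Suc.prems by auto
    then show ?case using Suc by auto
  qed
  then show ?thesis using ii less_imp_Suc_add[OF ii(1)] by (metis add_Suc_right order_refl)
qed

lemma runs_bound:
  assumes p: "p \<in> perms n" and q: "q \<in> perms n" and le: "weak_le p q"
  shows "n \<le> (card (asc p) + 1) * (card (des q) + 1)"
proof -
  have dp: "distinct p" "set p = {1..n}" "length p = n" and dq: "distinct q" "set q = {1..n}" "length q = n"
    using perms_D p q by auto
  define f where "f v = (card {k\<in>asc p. k < pos p v}, card {k\<in>des q. k < pos q v})" for v
  have key: False if uv: "u \<in> {1..n}" "v \<in> {1..n}" "pos p u < pos p v" "f u = f v" for u v
  proof -
    have pu: "pos p u < n" "p ! pos p u = u" "pos p v < n" "p ! pos p v = v" using pos dp uv by auto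
    have qu: "pos q u < n" "q ! pos q u = u" "pos q v < n" "q ! pos q v = v" using pos dq uv by auto
    have c1: "card {k\<in>asc p. k < pos p u} = card {k\<in>asc p. k < pos p v}" using uv(4) unfolding f_def by simp
    have nb: "\<And>k. pos p u \<le> k \<Longrightarrow> k < pos p v \<Longrightarrow> k \<notin> asc p"
      using no_between[OF finite_des(2) uv(3) c1] by blast
    have na: "\<not> p ! k < p ! Suc k" if "pos p u \<le> k" "k < pos p v" for k
    proof -
      have "k \<notin> asc p" "Suc k < length p" using nb[OF that] that pu dp by auto
      then show ?thesis unfolding asc_def by auto
    qed
    have "p ! pos p v < p ! pos p u" by (rule run_dec[OF dp(1) uv(3)]) (use pu dp na in auto)
    then have "v < u" using pu by simp
    moreover have "bef p u v" using bef_nth[OF uv(3)] pu dp by metis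
    ultimately have "(u,v) \<in> invs q" using le unfolding weak_le_def invs_bef by auto
    then have "bef q u v" unfolding invs_bef by auto
    then have lt: "pos q u < pos q v" using bef_pos dq by blast
    have c2: "card {k\<in>des q. k < pos q u} = card {k\<in>des q. k < pos q v}" using uv(4) unfolding f_def by simp
    have nb2: "\<And>k. pos q u \<le> k \<Longrightarrow> k < pos q v \<Longrightarrow> k \<notin> des q"
      using no_between[OF finite_des(1) lt c2] by blast
    have na2: "\<not> q ! Suc k < q ! k" if "pos q u \<le> k" "k < pos q v" for k
    proof -
      have "k \<notin> des q" "Suc k < length q" using nb2[OF that] that qu dq by auto
      then show ?thesis unfolding des_def by auto
    qed
    have "q ! pos q u < q ! pos q v" by (rule run_inc[OF dq(1) lt]) (use qu dq na2 in auto)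
    then have "u < v" using qu by simp
    then show False using \<open>v < u\<close> by simp
  qed
  have "inj_on f {1..n}"
  proof (rule inj_onI)
    fix u v assume uv: "u \<in> {1..n}" "v \<in> {1..n}" "f u = f v"
    show "u = v"
    proof (rule ccontr)
      assume "u \<noteq> v"
      then have "pos p u \<noteq> pos p v" using pos dp uv by metis
      then show False using key[of u v] key[of v u] uv by (metis linorder_neqE_nat)
    qed
  qed
  moreover have "f ` {1..n} \<subseteq> {0..card (asc p)} \<times> {0..card (des q)}"
    unfolding f_def using finite_des by (auto intro!: card_mono)
  ultimately have "card {1..n} \<le> card ({0..card (asc p)} \<times> {0..card (des q)})"
    by (intro card_inj_on_le) auto
  then show ?thesis by (simp add: card_cartesian_product)
qed

lemma des_asc_card: assumes p: "p \<in> perms n" and n: "n \<ge> 1"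
  shows "card (des p) + card (asc p) = n - 1"
proof -
  have dp: "distinct p" "length p = n" using perms_D p by auto
  have "des p \<union> asc p = {..<n-1}"
  proof -
    have "p ! i \<noteq> p ! Suc i" if "Suc i < n" for i using dp that nth_eq_iff_index_eq by fastforce
    then show ?thesis unfolding des_def asc_def using dp n by (auto simp: less_diff_conv) (metis linorder_neqE_nat)
  qed
  moreover have "des p \<inter> asc p = {}" unfolding des_def asc_def by auto
  ultimately show ?thesis using card_Un_disjoint[OF finite_des] by (metis card_lessThan)
qed

lemma sqrt_bound:
  assumes "(n::nat) \<le> a * b"
  shows "\<lceil>2 * sqrt (real n)\<rceil> \<le> int a + int b"
proof -
  have "real n \<le> real a * real b" using assms by (metis of_nat_le_iff of_nat_mult)
  moreover have "4 * (real a * real b) \<le> (real a + real b)^2"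
  proof -
    have "(real a + real b)^2 = (real a - real b)^2 + 4*(real a * real b)" by (simp add: power2_eq_square algebra_simps)
    then show ?thesis using zero_le_power2[of "real a - real b"] by linarith
  qed
  ultimately have "4 * real n \<le> (real a + real b)^2" by linarith
  then have "sqrt (4 * real n) \<le> real a + real b" by (intro real_le_lsqrt) auto
  moreover have "sqrt (4 * real n) = 2 * sqrt (real n)" by (simp add: real_sqrt_mult)
  ultimately have "2 * sqrt (real n) \<le> real_of_int (int a + int b)" by simp
  then show ?thesis by (simp add: ceiling_le_iff)
qed

lemma comb_bound:
  assumes p: "p \<in> perms n" and q: "q \<in> perms n" and le: "weak_le p q" and n: "n \<ge> 1"
  shows "int (card (des p) + card (asc q)) \<le> 2 * int n - \<lceil>2 * sqrt (real n)\<rceil>"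
proof -
  have "\<lceil>2 * sqrt (real n)\<rceil> \<le> int (card (asc p) + 1) + int (card (des q) + 1)"
    using sqrt_bound[OF runs_bound[OF p q le]] .
  moreover have "card (des p) + card (asc p) = n - 1" "card (des q) + card (asc q) = n - 1"
    using des_asc_card p q n by auto
  ultimately show ?thesis using n by linarith
qed

theorem upper_bound:
  assumes n: "n \<ge> 1" and cong: "lattice_congruence n R" and X: "X \<in> perms n // R"
  shows "int (qdegree n R X) \<le> 2 * int n - \<lceil>2 * sqrt (real n)\<rceil>"
proof -
  obtain m M where mM: "m \<in> X" "M \<in> X" "weak_le m M" "qdegree n R X \<le> card (des m) + card (asc M)"
    using degree_le[OF cong X] by blast
  have "m \<in> perms n" "M \<in> perms n" using mM class_sub[OF cong_equiv[OF cong] X] by auto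
  then have "int (card (des m) + card (asc M)) \<le> 2 * int n - \<lceil>2 * sqrt (real n)\<rceil>"
    using comb_bound mM n by blast
  then show ?thesis using mM(4) by linarith
qed



lemma A1:
  fixes x y s :: nat
  assumes s: "0 < s" and xy: "x < y" "y \<le> x + s"
  shows "y div s = x div s \<longleftrightarrow> x mod s < y mod s"
proof -
  have ex: "x = x div s * s + x mod s" and ey: "y = y div s * s + y mod s" by simp_all
  have le: "x div s \<le> y div s" using xy by (simp add: div_le_mono)
  have ms: "x mod s < s" "y mod s < s" using s by simp_all
  show ?thesis
  proof
    assume "y div s = x div s"
    then have "y div s * s = x div s * s" by simp
    then show "x mod s < y mod s" using ex ey xy by linarith
  next
    assume r: "x mod s < y mod s"
    show "y div s = x div s"
    proof (rule ccontr)
      assume "y div s \<noteq> x div s"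
      then have "Suc (x div s) \<le> y div s" using le by simp
      then have "Suc (x div s) * s \<le> y div s * s" by (rule mult_right_mono) simp
      then have "x div s * s + s \<le> y div s * s" by simp
      then show False using ex ey xy r by linarith
    qed
  qed
qed

lemma A2:
  fixes x y s :: nat
  assumes s: "0 < s" and xy: "x < y" "y < x + s"
  shows "x mod s \<noteq> y mod s"
proof
  assume r: "x mod s = y mod s"
  have ex: "x = x div s * s + x mod s" and ey: "y = y div s * s + y mod s" by simp_all
  have le: "x div s \<le> y div s" using xy by (simp add: div_le_mono)
  show False
  proof (cases "y div s = x div s")
    case True
    then have "y div s * s = x div s * s" by simp
    then show False using ex ey xy r by linarith
  next
    case False
    then have "Suc (x div s) \<le> y div s" using le by simp
    then have "Suc (x div s) * s \<le> y div s * s" by (rule mult_right_mono) simp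
    then have "x div s * s + s \<le> y div s * s" by simp
    then show False using ex ey xy r by linarith
  qed
qed

lemma A4:
  fixes v s :: nat
  assumes "1 \<le> v" "\<not> s dvd v"
  shows "v div s = (v - 1) div s"
proof -
  obtain w where v: "v = Suc w" using assms(1) by (cases v) auto
  have "Suc w mod s \<noteq> 0" using assms(2) v by (simp add: dvd_eq_mod_eq_0)
  then show ?thesis using v by (simp add: div_Suc)
qed

definition EE :: "nat \<Rightarrow> (nat \<times> nat) set" where
  "EE s = {(a,c). c < a \<and> a \<le> c + s}"

definition pat :: "nat \<Rightarrow> nat list \<Rightarrow> (nat \<times> nat) set" where
  "pat s x = invs x \<inter> EE s"

definition RR :: "nat \<Rightarrow> nat \<Rightarrow> (nat list \<times> nat list) set" where
  "RR n s = {(x,y). x \<in> perms n \<and> y \<in> perms n \<and> pat s x = pat s y}"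

lemma trancl_EE:
  fixes U :: "(nat \<times> nat) set"
  assumes UD: "U \<subseteq> {(a,c). c < a}"
  shows "U\<^sup>+ \<inter> EE s = (U \<inter> EE s)\<^sup>+ \<inter> EE s"
proof
  show "(U \<inter> EE s)\<^sup>+ \<inter> EE s \<subseteq> U\<^sup>+ \<inter> EE s" using trancl_mono by blast
  show "U\<^sup>+ \<inter> EE s \<subseteq> (U \<inter> EE s)\<^sup>+ \<inter> EE s"
  proof
    fix p assume p: "p \<in> U\<^sup>+ \<inter> EE s"
    obtain a c where pac: "p = (a,c)" by (cases p)
    have "(a,c) \<in> U\<^sup>+" "a \<le> c + s" using p pac unfolding EE_def by auto
    then have "(a,c) \<in> (U \<inter> EE s)\<^sup>+"
    proof (induction rule: trancl_induct)
      case (base y)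
      then have "y < a" using UD by blast
      then show ?case using base unfolding EE_def by auto
    next
      case (step y z)
      have "z < y" using step(2) UD by blast
      have "y < a" using trancl_desc[OF UD step(1)] .
      have "(a,y) \<in> (U \<inter> EE s)\<^sup>+" using step \<open>z < y\<close> by simp
      moreover have "(y,z) \<in> U \<inter> EE s" using step(2,4) \<open>z < y\<close> \<open>y < a\<close> unfolding EE_def by auto
      ultimately show ?case by (rule trancl_into_trancl)
    qed
    then show "p \<in> (U \<inter> EE s)\<^sup>+ \<inter> EE s" using p pac by auto
  qed
qed

lemma invs_desc: "p \<in> perms n \<Longrightarrow> invs p \<subseteq> {(a,c). c < a}"
  by (auto simp: invs_bef)

lemma DD_desc: "DD n - A \<subseteq> {(a,c). c < a}"
  by (auto simp: DD_def)

lemma pat_join: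
  assumes "x \<in> perms n" "y \<in> perms n" "is_join n x y z"
  shows "pat s z = (pat s x \<union> pat s y)\<^sup>+ \<inter> EE s"
proof -
  have "pat s z = (invs x \<union> invs y)\<^sup>+ \<inter> EE s" using join_char(2)[OF assms(1,2) assms(3)] unfolding pat_def by simp
  also have "\<dots> = ((invs x \<union> invs y) \<inter> EE s)\<^sup>+ \<inter> EE s"
    by (rule trancl_EE) (use invs_desc assms in blast)
  also have "(invs x \<union> invs y) \<inter> EE s = pat s x \<union> pat s y" unfolding pat_def by blast
  finally show ?thesis .
qed

lemma pat_meet:
  assumes "x \<in> perms n" "y \<in> perms n" "is_meet n x y z"
  shows "pat s z = (DD n \<inter> EE s) - ((((DD n \<inter> EE s) - pat s x) \<union> ((DD n \<inter> EE s) - pat s y))\<^sup>+ \<inter> EE s)"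
proof -
  let ?W = "(DD n - invs x) \<union> (DD n - invs y)"
  have "pat s z = (DD n - ?W\<^sup>+) \<inter> EE s" using meet_char(2)[OF assms(1,2) assms(3)] unfolding pat_def by simp
  also have "\<dots> = (DD n \<inter> EE s) - (?W\<^sup>+ \<inter> EE s)" by blast
  also have "?W\<^sup>+ \<inter> EE s = (?W \<inter> EE s)\<^sup>+ \<inter> EE s"
    by (rule trancl_EE) (use DD_desc in blast)
  also have "?W \<inter> EE s = ((DD n \<inter> EE s) - pat s x) \<union> ((DD n \<inter> EE s) - pat s y)" unfolding pat_def by blast
  finally show ?thesis .
qed

lemma RR_cong: "lattice_congruence n (RR n s)"
  unfolding lattice_congruence_def
proof (intro conjI allI impI)
  show "equiv (perms n) (RR n s)"
    unfolding equiv_def refl_on_def sym_def trans_def RR_def by auto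
next
  fix x x' y y' z z'
  assume h: "(x, x') \<in> RR n s \<and> (y, y') \<in> RR n s \<and> is_join n x y z \<and> is_join n x' y' z'"
  then have p: "x \<in> perms n" "x' \<in> perms n" "y \<in> perms n" "y' \<in> perms n"
    and e: "pat s x = pat s x'" "pat s y = pat s y'" unfolding RR_def by auto
  have "pat s z = pat s z'" using pat_join[of x n y z s] pat_join[of x' n y' z' s] p e h by simp
  moreover have "z \<in> perms n" "z' \<in> perms n" using h unfolding is_join_def by auto
  ultimately show "(z, z') \<in> RR n s" unfolding RR_def by auto
next
  fix x x' y y' z z'
  assume h: "(x, x') \<in> RR n s \<and> (y, y') \<in> RR n s \<and> is_meet n x y z \<and> is_meet n x' y' z'"
  then have p: "x \<in> perms n" "x' \<in> perms n" "y \<in> perms n" "y' \<in> perms n"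
    and e: "pat s x = pat s x'" "pat s y = pat s y'" unfolding RR_def by auto
  have "pat s z = pat s z'" using pat_meet[of x n y z s] pat_meet[of x' n y' z' s] p e h by simp
  moreover have "z \<in> perms n" "z' \<in> perms n" using h unfolding is_meet_def by auto
  ultimately show "(z, z') \<in> RR n s" unfolding RR_def by auto
qed

lemma RR_class: "x \<in> perms n \<Longrightarrow> RR n s `` {x} = {w \<in> perms n. pat s w = pat s x}"
  unfolding RR_def by auto

lemma cover_RR:
  assumes x: "x \<in> perms n" and y: "y \<in> perms n" and lt: "weak_less y x"
    and px: "pat s x = insert e (pat s y)" and ey: "e \<notin> pat s y"
  shows "qcovers n (RR n s) (RR n s `` {y}) (RR n s `` {x})"
proof -
  have E: "equiv (perms n) (RR n s)" using cong_equiv[OF RR_cong] .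
  let ?X = "RR n s `` {x}" and ?Y = "RR n s `` {y}"
  have XQ: "?X \<in> perms n // RR n s" and YQ: "?Y \<in> perms n // RR n s" using x y by (auto intro: quotientI)
  have xX: "x \<in> ?X" and yY: "y \<in> ?Y" using x y RR_class by auto
  have XY: "?X \<noteq> ?Y"
  proof
    assume "?X = ?Y"
    then have "x \<in> ?Y" using xX by simp
    then have "pat s x = pat s y" using RR_class[OF y] by simp
    then show False using px ey by auto
  qed
  have mono: "pat s a \<subseteq> pat s b" if "weak_less a b" for a b
    using that unfolding weak_less_def weak_le_def pat_def by auto
  have q: "qless ?Y ?X" unfolding qless_def using XY xX yY lt by blast
  have "\<not> (qless ?Y Z \<and> qless Z ?X)" if Z: "Z \<in> perms n // RR n s" for Z
  proof
    assume h: "qless ?Y Z \<and> qless Z ?X"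
    obtain z where z: "z \<in> perms n" "Z = RR n s `` {z}" using Z by (auto elim: quotientE)
    obtain y1 z1 where yz: "y1 \<in> ?Y" "z1 \<in> Z" "weak_less y1 z1" using h unfolding qless_def by blast
    have "pat s y1 = pat s y" using yz(1) RR_class[OF y] by simp
    moreover have "pat s z1 = pat s z" using yz(2) RR_class[OF z(1)] z(2) by simp
    ultimately have "pat s y \<subseteq> pat s z" using mono[OF yz(3)] by simp
    obtain z2 x2 where zx: "z2 \<in> Z" "x2 \<in> ?X" "weak_less z2 x2" using h unfolding qless_def by blast
    have "pat s x2 = pat s x" using zx(2) RR_class[OF x] by simp
    moreover have "pat s z2 = pat s z" using zx(1) RR_class[OF z(1)] z(2) by simp
    ultimately have "pat s z \<subseteq> pat s x" using mono[OF zx(3)] by simp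
    have "pat s z = pat s y \<or> pat s z = pat s x"
    proof (cases "e \<in> pat s z")
      case True
      then have "pat s x \<subseteq> pat s z" using px \<open>pat s y \<subseteq> pat s z\<close> by simp
      then show ?thesis using \<open>pat s z \<subseteq> pat s x\<close> by simp
    next
      case False
      then have "pat s z \<subseteq> pat s y" using px \<open>pat s z \<subseteq> pat s x\<close> by auto
      then show ?thesis using \<open>pat s y \<subseteq> pat s z\<close> by simp
    qed
    then have "Z = ?Y \<or> Z = ?X" using RR_class z x y by auto
    then show False using h unfolding qless_def by blast
  qed
  then show ?thesis unfolding qcovers_def using XQ YQ q by blast
qed



definition Tp :: "nat \<Rightarrow> nat \<Rightarrow> (nat \<times> nat) set" where
  "Tp n s = {(a,c) \<in> DD n. (a - 1) div s = (c - 1) div s}"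
definition Tq :: "nat \<Rightarrow> nat \<Rightarrow> (nat \<times> nat) set" where
  "Tq n s = {(a,c) \<in> DD n. (c - 1) mod s < (a - 1) mod s}"

lemma good_Tp: "good n (Tp n s)"
  unfolding good_def
proof (intro conjI)
  show "Tp n s \<subseteq> DD n" unfolding Tp_def by auto
  show "trans (Tp n s)" unfolding trans_def Tp_def DD_def by auto
  show "cotr (Tp n s)" unfolding cotr_def
  proof (intro allI impI)
    fix a b c assume h: "(a,c) \<in> Tp n s" "c < b" "b < a"
    then have d: "1 \<le> c" "a \<le> n" "(a - 1) div s = (c - 1) div s" unfolding Tp_def DD_def by auto
    have "(c - 1) div s \<le> (b - 1) div s" "(b - 1) div s \<le> (a - 1) div s" using h by (auto intro: div_le_mono)
    then have "(a - 1) div s = (b - 1) div s" using d by simp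
    then show "(a,b) \<in> Tp n s \<or> (b,c) \<in> Tp n s" using h d unfolding Tp_def DD_def by auto
  qed
qed

lemma good_Tq: "good n (Tq n s)"
  unfolding good_def
proof (intro conjI)
  show "Tq n s \<subseteq> DD n" unfolding Tq_def by auto
  show "trans (Tq n s)" unfolding trans_def Tq_def DD_def by auto
  show "cotr (Tq n s)" unfolding cotr_def
  proof (intro allI impI)
    fix a b c assume h: "(a,c) \<in> Tq n s" "c < b" "b < a"
    then have d: "1 \<le> c" "a \<le> n" "(c - 1) mod s < (a - 1) mod s" unfolding Tq_def DD_def by auto
    show "(a,b) \<in> Tq n s \<or> (b,c) \<in> Tq n s"
    proof (cases "(c - 1) mod s < (b - 1) mod s")
      case True then show ?thesis using h d unfolding Tq_def DD_def by auto
    next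
      case False then show ?thesis using h d unfolding Tq_def DD_def by auto
    qed
  qed
qed

lemma pat_Tp_Tq:
  assumes s: "0 < s"
  shows "Tp n s \<inter> EE s = Tq n s \<inter> EE s"
proof -
  have "(a - 1) div s = (c - 1) div s \<longleftrightarrow> (c - 1) mod s < (a - 1) mod s"
    if "1 \<le> c" "c < a" "a \<le> c + s" for a c
    using A1[OF s, of "c - 1" "a - 1"] that by auto
  then show ?thesis unfolding Tp_def Tq_def EE_def DD_def by auto
qed

lemma good_Tp_del:
  assumes v: "1 \<le> v" "v < n" "v div s = (v - 1) div s"
  shows "good n (Tp n s - {(Suc v, v)})"
  unfolding good_def
proof (intro conjI)
  show "Tp n s - {(Suc v, v)} \<subseteq> DD n" unfolding Tp_def by auto
  show "trans (Tp n s - {(Suc v, v)})" unfolding trans_def Tp_def DD_def by auto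
  show "cotr (Tp n s - {(Suc v, v)})" unfolding cotr_def
  proof (intro allI impI)
    fix a b c assume h: "(a,c) \<in> Tp n s - {(Suc v, v)}" "c < b" "b < a"
    then have d: "1 \<le> c" "a \<le> n" "(a - 1) div s = (c - 1) div s" unfolding Tp_def DD_def by auto
    have "(c - 1) div s \<le> (b - 1) div s" "(b - 1) div s \<le> (a - 1) div s" using h by (auto intro: div_le_mono)
    then have "(a - 1) div s = (b - 1) div s" "(b - 1) div s = (c - 1) div s" using d by simp_all
    then have "(a,b) \<in> Tp n s" "(b,c) \<in> Tp n s" using h d unfolding Tp_def DD_def by auto
    moreover have "(a,b) \<noteq> (Suc v, v) \<or> (b,c) \<noteq> (Suc v, v)" by auto
    ultimately show "(a,b) \<in> Tp n s - {(Suc v, v)} \<or> (b,c) \<in> Tp n s - {(Suc v, v)}" by blast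
  qed
qed

lemma good_Tq_add:
  assumes s: "0 < s" and c: "1 \<le> c" "c + s \<le> n"
  shows "good n (Tq n s \<union> {(c + s, c)})"
  unfolding good_def
proof (intro conjI)
  have rs: "(c + s - 1) mod s = (c - 1) mod s"
  proof -
    have "c + s - 1 = (c - 1) + s" using c by simp
    then show ?thesis by simp
  qed
  show "Tq n s \<union> {(c + s, c)} \<subseteq> DD n" using s c unfolding Tq_def DD_def by auto
  show "trans (Tq n s \<union> {(c + s, c)})" unfolding trans_def
  proof (intro allI impI)
    fix x y z assume h: "(x,y) \<in> Tq n s \<union> {(c + s, c)}" "(y,z) \<in> Tq n s \<union> {(c + s, c)}"
    consider "(x,y) \<in> Tq n s" "(y,z) \<in> Tq n s" | "(x,y) = (c+s,c)" "(y,z) \<in> Tq n s"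
      | "(x,y) \<in> Tq n s" "(y,z) = (c+s,c)" | "(x,y) = (c+s,c)" "(y,z) = (c+s,c)" using h by blast
    then show "(x,z) \<in> Tq n s \<union> {(c + s, c)}"
    proof cases
      case 1 then show ?thesis using good_Tq[of n s] unfolding good_def trans_def by blast
    next
      case 2 then show ?thesis using rs c s unfolding Tq_def DD_def by auto
    next
      case 3 then show ?thesis using rs c s unfolding Tq_def DD_def by auto
    next
      case 4 then show ?thesis using s by auto
    qed
  qed
  show "cotr (Tq n s \<union> {(c + s, c)})" unfolding cotr_def
  proof (intro allI impI)
    fix x y z assume h: "(x,z) \<in> Tq n s \<union> {(c + s, c)}" "z < y" "y < x"
    show "(x,y) \<in> Tq n s \<union> {(c + s, c)} \<or> (y,z) \<in> Tq n s \<union> {(c + s, c)}"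
    proof (cases "(x,z) \<in> Tq n s")
      case True then show ?thesis using good_Tq[of n s] h unfolding good_def cotr_def by blast
    next
      case False
      then have xz: "x = c + s" "z = c" using h by auto
      have "(c - 1) mod s \<noteq> (y - 1) mod s" using A2[OF s, of "c - 1" "y - 1"] h xz c by auto
      then show ?thesis using h xz c rs unfolding Tq_def DD_def by auto
    qed
  qed
qed

lemma pat_realize: "good n T \<Longrightarrow> pat s (realize n T) = T \<inter> EE s"
  using realize unfolding pat_def by auto

lemma count_Vd:
  assumes s: "0 < s" and r: "1 \<le> r" and nrs: "n \<le> r * s"
  shows "n \<le> card {v. 1 \<le> v \<and> v < n \<and> v div s = (v - 1) div s} + r"
proof -
  let ?Vd = "{v. 1 \<le> v \<and> v < n \<and> v div s = (v - 1) div s}"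
  have "{1..<n} \<subseteq> ?Vd \<union> (\<lambda>k. s * k) ` {1..<r}"
  proof
    fix v assume v: "v \<in> {1..<n}"
    show "v \<in> ?Vd \<union> (\<lambda>k. s * k) ` {1..<r}"
    proof (cases "s dvd v")
      case True
      then obtain k where k: "v = s * k" by blast
      have "1 \<le> k" using k v by (cases k) auto
      moreover have "k < r"
      proof (rule ccontr)
        assume "\<not> k < r"
        then have "r * s \<le> k * s" by (intro mult_right_mono) auto
        moreover have "v = k * s" using k by simp
        moreover have "v < n" using v by simp
        ultimately show False using nrs by linarith
      qed
      ultimately show ?thesis using k by auto
    next
      case False
      then show ?thesis using A4[of v s] v by auto
    qed
  qed
  then have "card {1..<n} \<le> card (?Vd \<union> (\<lambda>k. s * k) ` {1..<r})"
    by (intro card_mono) auto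
  also have "\<dots> \<le> card ?Vd + card ((\<lambda>k. s * k) ` {1..<r})" by (rule card_Un_le)
  also have "\<dots> \<le> card ?Vd + (r - 1)" using card_image_le[of "{1..<r}" "\<lambda>k. s * k"] by simp
  finally show ?thesis using r by simp
qed

lemma card_Vu: "card {c. 1 \<le> c \<and> c + s \<le> n} = n - s"
proof -
  have "{c. 1 \<le> c \<and> c + s \<le> n} = {1..n - s}" by auto
  then show ?thesis by simp
qed



lemma class_pat: "x \<in> perms n \<Longrightarrow> w \<in> RR n s `` {x} \<Longrightarrow> pat s w = pat s x"
  using RR_class by auto

lemma lower:
  assumes n: "1 \<le> n" and s: "0 < s" and r: "1 \<le> r" and nrs: "n \<le> r * s"
  shows "\<exists>X \<in> perms n // RR n s. 2 * int n - (int r + int s) \<le> int (qdegree n (RR n s) X)"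
proof -
  let ?R = "RR n s"
  have E: "equiv (perms n) ?R" using cong_equiv[OF RR_cong] .
  define p where "p = realize n (Tp n s)"
  define q where "q = realize n (Tq n s)"
  have pp: "p \<in> perms n" "invs p = Tp n s" using realize[OF good_Tp] p_def by auto
  have qp: "q \<in> perms n" "invs q = Tq n s" using realize[OF good_Tq] q_def by auto
  have patp: "pat s p = Tp n s \<inter> EE s" using pp unfolding pat_def by simp
  have patq: "pat s q = Tp n s \<inter> EE s" using qp pat_Tp_Tq[OF s] unfolding pat_def by simp
  define X where "X = ?R `` {p}"
  have XQ: "X \<in> perms n // ?R" using pp X_def by (auto intro: quotientI)
  have Xq: "?R `` {q} = X" unfolding X_def using RR_class[OF pp(1)] RR_class[OF qp(1)] patp patq by simp
  define Vd where "Vd = {v. 1 \<le> v \<and> v < n \<and> v div s = (v - 1) div s}"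
  define Vu where "Vu = {c. 1 \<le> c \<and> c + s \<le> n}"
  define yd where "yd v = realize n (Tp n s - {(Suc v, v)})" for v
  define yu where "yu c = realize n (Tq n s \<union> {(c + s, c)})" for c
  define F where "F v = ?R `` {yd v}" for v
  define G where "G c = ?R `` {yu c}" for c
  have ydp: "yd v \<in> perms n" "pat s (yd v) = (Tp n s \<inter> EE s) - {(Suc v, v)}"
    "(Suc v, v) \<in> Tp n s \<inter> EE s" "invs (yd v) = Tp n s - {(Suc v, v)}" if v: "v \<in> Vd" for v
  proof -
    have g: "good n (Tp n s - {(Suc v, v)})" using good_Tp_del v unfolding Vd_def by auto
    show "yd v \<in> perms n" "invs (yd v) = Tp n s - {(Suc v, v)}" using realize[OF g] yd_def by auto
    show "pat s (yd v) = (Tp n s \<inter> EE s) - {(Suc v, v)}" using pat_realize[OF g] yd_def by auto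
    show "(Suc v, v) \<in> Tp n s \<inter> EE s" using v s unfolding Vd_def Tp_def DD_def EE_def by auto
  qed
  have yup: "yu c \<in> perms n" "pat s (yu c) = insert (c + s, c) (Tp n s \<inter> EE s)"
    "(c + s, c) \<notin> Tp n s \<inter> EE s" "invs (yu c) = Tq n s \<union> {(c + s, c)}" "(c + s, c) \<notin> Tq n s"
    if c: "c \<in> Vu" for c
  proof -
    have g: "good n (Tq n s \<union> {(c + s, c)})" using good_Tq_add[OF s] c unfolding Vu_def by auto
    show "yu c \<in> perms n" "invs (yu c) = Tq n s \<union> {(c + s, c)}" using realize[OF g] yu_def by auto
    have rs: "(c + s - 1) mod s = (c - 1) mod s"
    proof -
      have "c + s - 1 = (c - 1) + s" using c unfolding Vu_def by simp
      then show ?thesis by simp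
    qed
    show nq: "(c + s, c) \<notin> Tq n s" using rs unfolding Tq_def by auto
    have eE: "(c + s, c) \<in> EE s" using s unfolding EE_def by auto
    show "pat s (yu c) = insert (c + s, c) (Tp n s \<inter> EE s)"
      using pat_realize[OF g] yu_def pat_Tp_Tq[OF s] eE by auto
    show "(c + s, c) \<notin> Tp n s \<inter> EE s" using nq pat_Tp_Tq[OF s] by blast
  qed
  have covF: "qcovers n ?R (F v) X" if v: "v \<in> Vd" for v
  proof -
    have "weak_less (yd v) p" using ydp[OF v] pp unfolding weak_less_def weak_le_def by auto
    moreover have "pat s p = insert (Suc v, v) (pat s (yd v))" using ydp[OF v] patp by auto
    moreover have "(Suc v, v) \<notin> pat s (yd v)" using ydp[OF v] by auto
    ultimately show ?thesis using cover_RR[OF pp(1) ydp(1)[OF v]] unfolding F_def X_def by blast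
  qed
  have covG: "qcovers n ?R X (G c)" if c: "c \<in> Vu" for c
  proof -
    have "weak_less q (yu c)" using yup[OF c] qp unfolding weak_less_def weak_le_def by auto
    moreover have "pat s (yu c) = insert (c + s, c) (pat s q)" using yup[OF c] patq by auto
    moreover have "(c + s, c) \<notin> pat s q" using yup[OF c] patq by auto
    ultimately show ?thesis using cover_RR[OF yup(1)[OF c] qp(1)] Xq unfolding G_def by metis
  qed
  have Fpat: "w \<in> F v \<Longrightarrow> pat s w = pat s (yd v)" if "v \<in> Vd" for v w
    using class_pat[OF ydp(1)[OF that]] unfolding F_def by blast
  have Gpat: "w \<in> G c \<Longrightarrow> pat s w = pat s (yu c)" if "c \<in> Vu" for c w
    using class_pat[OF yup(1)[OF that]] unfolding G_def by blast
  have Fin: "yd v \<in> F v" if "v \<in> Vd" for v using class_in[OF E ydp(1)[OF that]] unfolding F_def by blast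
  have Gin: "yu c \<in> G c" if "c \<in> Vu" for c using class_in[OF E yup(1)[OF that]] unfolding G_def by blast
  have injF: "inj_on F Vd"
  proof (rule inj_onI)
    fix v v' assume h: "v \<in> Vd" "v' \<in> Vd" "F v = F v'"
    then have "pat s (yd v) = pat s (yd v')" using Fin[OF h(1)] Fpat[OF h(2)] by simp
    then have "(Tp n s \<inter> EE s) - {(Suc v, v)} = (Tp n s \<inter> EE s) - {(Suc v', v')}" using ydp h by simp
    then have "(Suc v, v) = (Suc v', v')" using ydp(3)[OF h(1)] ydp(3)[OF h(2)] by blast
    then show "v = v'" by simp
  qed
  have injG: "inj_on G Vu"
  proof (rule inj_onI)
    fix c c' assume h: "c \<in> Vu" "c' \<in> Vu" "G c = G c'"
    then have "pat s (yu c) = pat s (yu c')" using Gin[OF h(1)] Gpat[OF h(2)] by simp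
    then have "insert (c + s, c) (Tp n s \<inter> EE s) = insert (c' + s, c') (Tp n s \<inter> EE s)" using yup h by simp
    then have "(c + s, c) = (c' + s, c')" using yup(3)[OF h(1)] yup(3)[OF h(2)] by blast
    then show "c = c'" by simp
  qed
  have disj: "F ` Vd \<inter> G ` Vu = {}"
  proof (rule ccontr)
    assume "F ` Vd \<inter> G ` Vu \<noteq> {}"
    then obtain v c where h: "v \<in> Vd" "c \<in> Vu" "F v = G c" by blast
    then have "pat s (yd v) = pat s (yu c)" using Fin[OF h(1)] Gpat[OF h(2)] by simp
    then have "(c + s, c) \<in> (Tp n s \<inter> EE s) - {(Suc v, v)}" using ydp[OF h(1)] yup[OF h(2)] by simp
    then show False using yup(3)[OF h(2)] by blast
  qed
  let ?N = "{Y \<in> perms n // ?R. qcovers n ?R X Y \<or> qcovers n ?R Y X}"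
  have sub: "F ` Vd \<union> G ` Vu \<subseteq> ?N" using covF covG unfolding qcovers_def by blast
  have finQ: "finite (perms n // ?R)" using finite_perms unfolding quotient_def by auto
  have finV: "finite Vd" "finite Vu" unfolding Vd_def Vu_def by (rule finite_subset[of _ "{..n}"], auto)+
  have "card Vd + card Vu = card (F ` Vd) + card (G ` Vu)"
    using card_image[OF injF] card_image[OF injG] by simp
  also have "\<dots> = card (F ` Vd \<union> G ` Vu)" using disj finV by (intro card_Un_disjoint[symmetric]) auto
  also have "\<dots> \<le> card ?N" using sub finQ by (intro card_mono) auto
  finally have cN: "card Vd + card Vu \<le> qdegree n ?R X" unfolding qdegree_def .
  have "n \<le> card Vd + r" using count_Vd[OF s r nrs] unfolding Vd_def .
  moreover have "card Vu = n - s" using card_Vu unfolding Vu_def .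
  ultimately have "2 * int n - (int r + int s) \<le> int (qdegree n ?R X)" using cN by linarith
  then show ?thesis using XQ by blast
qed

lemma choose_rs:
  assumes n: "1 \<le> n"
  shows "\<exists>r s. 1 \<le> r \<and> 0 < s \<and> n \<le> r * s \<and> int r + int s = \<lceil>2 * sqrt (real n)\<rceil>"
proof -
  define t where "t = \<lceil>2 * sqrt (real n)\<rceil>"
  have sq: "1 \<le> sqrt (real n)" using n by simp
  have t1: "2 * sqrt (real n) \<le> real_of_int t" unfolding t_def by simp
  then have t2: "2 \<le> t" using sq by linarith
  have "(2 * sqrt (real n))^2 \<le> (real_of_int t)^2" using t1 sq by (intro power_mono) auto
  moreover have "(2 * sqrt (real n))^2 = 4 * real n" by (simp add: power_mult_distrib)
  ultimately have "real_of_int (4 * int n) \<le> real_of_int (t^2)" by simp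
  then have t4: "4 * int n \<le> t^2" by linarith
  define k where "k = t div 2"
  have tk: "t = 2 * k + t mod 2" unfolding k_def by simp
  have k1: "1 \<le> k" using t2 unfolding k_def by linarith
  have "t mod 2 = 0 \<or> t mod 2 = 1" by auto
  then show ?thesis
  proof
    assume m: "t mod 2 = 0"
    then have "t^2 = 4 * (k * k)" using tk by (simp add: power2_eq_square algebra_simps)
    then have kk: "int n \<le> k * k" using t4 by linarith
    have "n \<le> nat k * nat k"
    proof -
      have "int (nat k * nat k) = k * k" using k1 by simp
      then show ?thesis using kk by linarith
    qed
    moreover have "int (nat k) + int (nat k) = t" using tk m k1 by simp
    ultimately show ?thesis using k1 unfolding t_def by (intro exI[of _ "nat k"]) auto
  next
    assume m: "t mod 2 = 1"
    then have "t^2 = 4 * (k * k + k) + 1" using tk by (simp add: power2_eq_square algebra_simps)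
    then have h4: "4 * int n \<le> 4 * (k * k + k) + 1" using t4 by linarith
    have kk: "int n \<le> k * k + k"
    proof (rule ccontr)
      assume "\<not> int n \<le> k * k + k"
      then have "k * k + k + 1 \<le> int n" by linarith
      moreover have "\<And>X::int. X + 1 \<le> int n \<Longrightarrow> 4 * int n \<le> 4 * X + 1 \<Longrightarrow> False" by linarith
      ultimately show False using h4 by blast
    qed
    have "k * k + k = (k + 1) * k" by (simp add: algebra_simps)
    then have kk': "int n \<le> (k + 1) * k" using kk by simp
    have "n \<le> nat (k + 1) * nat k"
    proof -
      have "int (nat (k + 1) * nat k) = (k + 1) * k" using k1 by simp
      then show ?thesis using kk' by linarith
    qed
    moreover have "int (nat (k + 1)) + int (nat k) = t" using tk m k1 by simp
    ultimately show ?thesis using k1 unfolding t_def by (intro exI[of _ "nat (k + 1)"] exI[of _ "nat k"]) auto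
  qed
qed

theorem mainTheorem15:
  shows "(\<forall>n::nat. \<forall>R. n \<ge> 1 \<and> lattice_congruence n R \<longrightarrow>
            (\<forall>X \<in> perms n // R.
               int (qdegree n R X) \<le> 2 * int n - \<lceil>2 * sqrt (real n)\<rceil>))
       \<and> (\<forall>n::nat. n \<ge> 1 \<longrightarrow>
            (\<exists>R. lattice_congruence n R \<and>
               (\<exists>X \<in> perms n // R.
                  int (qdegree n R X) = 2 * int n - \<lceil>2 * sqrt (real n)\<rceil>)))"
proof (intro conjI allI impI ballI)
  fix n :: nat and R X
  assume "n \<ge> 1 \<and> lattice_congruence n R" "X \<in> perms n // R"
  then show "int (qdegree n R X) \<le> 2 * int n - \<lceil>2 * sqrt (real n)\<rceil>" using upper_bound by blast
next
  fix n :: nat assume n: "n \<ge> 1"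
  obtain r s where rs: "1 \<le> r" "0 < s" "n \<le> r * s" "int r + int s = \<lceil>2 * sqrt (real n)\<rceil>"
    using choose_rs[OF n] by blast
  obtain X where X: "X \<in> perms n // RR n s" "2 * int n - (int r + int s) \<le> int (qdegree n (RR n s) X)"
    using lower[OF n rs(2) rs(1) rs(3)] by blast
  have "int (qdegree n (RR n s) X) \<le> 2 * int n - \<lceil>2 * sqrt (real n)\<rceil>"
    using upper_bound[OF n RR_cong X(1)] .
  then have "int (qdegree n (RR n s) X) = 2 * int n - \<lceil>2 * sqrt (real n)\<rceil>" using X(2) rs(4) by linarith
  then show "\<exists>R. lattice_congruence n R \<and> (\<exists>X \<in> perms n // R.
                  int (qdegree n R X) = 2 * int n - \<lceil>2 * sqrt (real n)\<rceil>)"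
    using RR_cong X(1) by blast
qed


end
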